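(* Let $s\geq 1$ be an integer and $\tau\in\mathbb{C}$. For a function $f(z_1,\dots,z_s)$ define the antisymmetrizer $$\mathcal{A}_{z_1,\ldots,z_s}[f(z_1,\dots,z_s)]=\sum_{\sigma\in S_s}(-1)^{[\sigma]}f(z_{\sigma_1},\dots,z_{\sigma_s}),$$ where $[\sigma]$ denotes the parity of the permutation $\sigma$. Then, as an identity of rational functions in the variables $x_1,\dots,x_s,y_1,\dots,y_s$, $$\mathcal{A}_{x_1,\dots,x_s}\mathcal{A}_{y_1,\dots,y_s}\left[\prod_{j=1}^s \frac{(x_jy_j)^{s-j}}{1-\prod_{l=1}^j x_ly_l}\prod_{1\leq j<k\leq s}(x_jx_k+\tau x_k+1)(y_jy_k+\tau y_k+1)\right] =\prod_{j,k=1}^{s}(x_j+y_k+\tau x_jy_k)\,\det_{1\leq j,k\leq s}\left[\psi(x_j,y_k)\right],$$ where $$\psi(x,y)=\frac{1}{(1-xy)(x+y+\tau xy)}.$$ The antisymmetrization in the $x$'s permutes $x_1,\dots,x_s$ and the one in the $y$'s permutes $y_1,\dots,y_s$, independently. *)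

theory Defs
  imports Complex_Main "HOL-Combinatorics.Permutations" "Jordan_Normal_Form.Determinant"
begin

definition antisym :: "nat \<Rightarrow> ((nat \<Rightarrow> complex) \<Rightarrow> complex) \<Rightarrow> (nat \<Rightarrow> complex) \<Rightarrow> complex" where
  "antisym s f z = (\<Sum>\<sigma> | \<sigma> permutes {1..s}. of_int (sign \<sigma>) * f (\<lambda>i. z (\<sigma> i)))"

definition psi :: "complex \<Rightarrow> complex \<Rightarrow> complex \<Rightarrow> complex" where
  "psi \<tau> x y = 1 / ((1 - x * y) * (x + y + \<tau> * x * y))"

definition lhs_summand :: "nat \<Rightarrow> complex \<Rightarrow> (nat \<Rightarrow> complex) \<Rightarrow> (nat \<Rightarrow> complex) \<Rightarrow> complex" where
  "lhs_summand s \<tau> x y =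
     (\<Prod>j=1..s. (x j * y j) ^ (s - j) / (1 - (\<Prod>l=1..j. x l * y l))) *
     (\<Prod>j\<in>{1..s}. \<Prod>k\<in>{j<..s}. (x j * x k + \<tau> * x k + 1) * (y j * y k + \<tau> * y k + 1))"

end

theory Submission
  imports Defs
begin

definition As :: "nat set \<Rightarrow> ((nat \<Rightarrow> complex) \<Rightarrow> complex) \<Rightarrow> (nat \<Rightarrow> complex) \<Rightarrow> complex" where
  "As I f y = (\<Sum>\<pi> | \<pi> permutes I. of_int (sign \<pi>) * f (y \<circ> \<pi>))"

lemma antisym_As: "antisym s f z = As {1..s} f z"
  unfolding antisym_def As_def by (simp add: comp_def)

lemma As_insert:
  assumes "finite I" "q \<notin> I"
  shows "As (insert q I) f y =
    (\<Sum>b\<in>insert q I. (if b = q then 1 else -1) * As I f (y \<circ> Transposition.transpose q b))"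
proof -
  have "As (insert q I) f y = (\<Sum>b\<in>insert q I. \<Sum>p | p permutes I.
      of_int (sign (Transposition.transpose q b \<circ> p)) * f (y \<circ> (Transposition.transpose q b \<circ> p)))"
    unfolding As_def by (rule sum_over_permutations_insert[OF assms])
  also have "\<dots> = (\<Sum>b\<in>insert q I. (if b = q then 1 else -1) * As I f (y \<circ> Transposition.transpose q b))"
  proof (rule sum.cong[OF refl])
    fix b assume b: "b \<in> insert q I"
    have "(\<Sum>p | p permutes I. of_int (sign (Transposition.transpose q b \<circ> p)) * f (y \<circ> (Transposition.transpose q b \<circ> p)))
      = (\<Sum>p | p permutes I. (if b = q then 1 else -1) * (of_int (sign p) * f ((y \<circ> Transposition.transpose q b) \<circ> p)))"
    proof (rule sum.cong[OF refl])
      fix p assume "p \<in> {p. p permutes I}"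
      then have p: "p permutes I" by simp
      have pp: "permutation p" using p assms(1) permutation_permutes by blast
      have "sign (Transposition.transpose q b \<circ> p) = sign (Transposition.transpose q b) * sign p"
        by (rule sign_compose[OF permutation_swap_id pp])
      then show "of_int (sign (Transposition.transpose q b \<circ> p)) * f (y \<circ> (Transposition.transpose q b \<circ> p))
        = (if b = q then 1 else -1) * (of_int (sign p) * f ((y \<circ> Transposition.transpose q b) \<circ> p))"
        by (simp add: sign_swap_id o_assoc)
    qed
    also have "\<dots> = (if b = q then 1 else -1) * As I f (y \<circ> Transposition.transpose q b)"
      unfolding As_def by (simp add: sum_distrib_left)
    finally show "(\<Sum>p | p permutes I. of_int (sign (Transposition.transpose q b \<circ> p)) * f (y \<circ> (Transposition.transpose q b \<circ> p)))
      = (if b = q then 1 else -1) * As I f (y \<circ> Transposition.transpose q b)" .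
  qed
  finally show ?thesis .
qed

lemma As_reindex:
  assumes "finite I" "g permutes I"
  shows "As I (\<lambda>z. f (z \<circ> g)) y = of_int (sign g) * As I f y"
proof -
  have gp: "permutation g" using assms permutation_permutes by blast
  have ig: "inv_into UNIV g permutes I" using assms(2) permutes_inv by blast
  have igp: "permutation (inv_into UNIV g)" using ig assms(1) permutation_permutes by blast
  have bij: "bij_betw (\<lambda>p. p \<circ> inv_into UNIV g) {p. p permutes I} {p. p permutes I}"
  proof (rule bij_betw_byWitness[where f' = "\<lambda>p. p \<circ> g"])
    show "\<forall>a\<in>{p. p permutes I}. a \<circ> inv_into UNIV g \<circ> g = a"
      using permutes_inv_o(2)[OF assms(2)] by (simp add: comp_assoc)
    show "\<forall>a\<in>{p. p permutes I}. a \<circ> g \<circ> inv_into UNIV g = a"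
      using permutes_inv_o(1)[OF assms(2)] by (simp add: comp_assoc)
    show "(\<lambda>p. p \<circ> inv_into UNIV g) ` {p. p permutes I} \<subseteq> {p. p permutes I}"
      using permutes_compose[OF ig] by blast
    show "(\<lambda>p. p \<circ> g) ` {p. p permutes I} \<subseteq> {p. p permutes I}"
      using permutes_compose[OF assms(2)] by blast
  qed
  have "As I (\<lambda>z. f (z \<circ> g)) y = (\<Sum>p | p permutes I. of_int (sign (p \<circ> inv_into UNIV g)) * f (y \<circ> (p \<circ> inv_into UNIV g) \<circ> g))"
    unfolding As_def by (rule sum.reindex_bij_betw[OF bij, symmetric])
  also have "\<dots> = (\<Sum>p | p permutes I. of_int (sign g) * (of_int (sign p) * f (y \<circ> p)))"
  proof (rule sum.cong[OF refl])
    fix p assume "p \<in> {p. p permutes I}"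
    then have pp: "permutation p" using assms(1) permutation_permutes by blast
    have "sign (p \<circ> inv_into UNIV g) = sign p * sign g"
      using sign_compose[OF pp igp] sign_inverse[OF gp] by simp
    moreover have "y \<circ> (p \<circ> inv_into UNIV g) \<circ> g = y \<circ> p"
      using permutes_inv_o(2)[OF assms(2)] by (simp add: comp_assoc)
    ultimately show "of_int (sign (p \<circ> inv_into UNIV g)) * f (y \<circ> (p \<circ> inv_into UNIV g) \<circ> g) = of_int (sign g) * (of_int (sign p) * f (y \<circ> p))"
      by simp
  qed
  also have "\<dots> = of_int (sign g) * As I f y"
    unfolding As_def by (simp add: sum_distrib_left)
  finally show ?thesis .
qed

lemma As_antisym:
  assumes "finite I" "g permutes I"
  shows "As I f (y \<circ> g) = of_int (sign g) * As I f y"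
proof -
  show ?thesis
    unfolding As_def
  proof -
    have bij: "bij_betw (\<lambda>p. g \<circ> p) {p. p permutes I} {p. p permutes I}"
    proof (rule bij_betw_byWitness[where f' = "\<lambda>p. inv_into UNIV g \<circ> p"])
      show "\<forall>a\<in>{p. p permutes I}. inv_into UNIV g \<circ> (g \<circ> a) = a"
        using permutes_inv_o(2)[OF assms(2)] by (simp add: o_assoc)
      show "\<forall>a\<in>{p. p permutes I}. g \<circ> (inv_into UNIV g \<circ> a) = a"
        using permutes_inv_o(1)[OF assms(2)] by (simp add: o_assoc)
      show "(\<circ>) g ` {p. p permutes I} \<subseteq> {p. p permutes I}"
        using permutes_compose[OF _ assms(2)] by blast
      show "(\<circ>) (inv_into UNIV g) ` {p. p permutes I} \<subseteq> {p. p permutes I}"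
        using permutes_compose[OF _ permutes_inv[OF assms(2)]] by blast
    qed
    have gp: "permutation g" using assms permutation_permutes by blast
    have "(\<Sum>\<pi> | \<pi> permutes I. of_int (sign \<pi>) * f (y \<circ> \<pi>)) =
        (\<Sum>\<pi> | \<pi> permutes I. of_int (sign (g \<circ> \<pi>)) * f (y \<circ> (g \<circ> \<pi>)))"
      by (rule sum.reindex_bij_betw[OF bij, symmetric])
    also have "\<dots> = (\<Sum>\<pi> | \<pi> permutes I. of_int (sign g) * (of_int (sign \<pi>) * f (y \<circ> g \<circ> \<pi>)))"
    proof (rule sum.cong[OF refl])
      fix p assume "p \<in> {p. p permutes I}"
      then have pp: "permutation p" using assms(1) permutation_permutes by blast
      show "of_int (sign (g \<circ> p)) * f (y \<circ> (g \<circ> p)) = of_int (sign g) * (of_int (sign p) * f (y \<circ> g \<circ> p))"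
        using sign_compose[OF gp pp] by (simp add: o_assoc)
    qed
    finally have "(\<Sum>\<pi> | \<pi> permutes I. of_int (sign \<pi>) * f (y \<circ> \<pi>)) =
        of_int (sign g) * (\<Sum>\<pi> | \<pi> permutes I. of_int (sign \<pi>) * f (y \<circ> g \<circ> \<pi>))"
      by (simp add: sum_distrib_left)
    then show "(\<Sum>\<pi> | \<pi> permutes I. of_int (sign \<pi>) * f (y \<circ> g \<circ> \<pi>)) =
        of_int (sign g) * (\<Sum>\<pi> | \<pi> permutes I. of_int (sign \<pi>) * f (y \<circ> \<pi>))"
      by (simp add: sign_def)
  qed
qed

lemma As_sym_factor:
  assumes "\<And>\<pi> z. \<pi> permutes I \<Longrightarrow> g (z \<circ> \<pi>) = g z"
  shows "As I (\<lambda>z. g z * f z) y = g y * As I f y"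
  unfolding As_def sum_distrib_left
  by (rule sum.cong[OF refl]) (simp add: assms)

lemma As_add: "As I (\<lambda>z. f z + g z) y = As I f y + As I g y"
  unfolding As_def by (simp add: distrib_left sum.distrib)

lemma As_diff: "As I (\<lambda>z. f z - g z) y = As I f y - As I g y"
  unfolding As_def by (simp add: right_diff_distrib sum_subtractf)

lemma As_sum: "As I (\<lambda>z. \<Sum>i\<in>A. f i z) y = (\<Sum>i\<in>A. As I (f i) y)"
  unfolding As_def by (simp add: sum_distrib_left sum.swap[of _ A])

lemma As_cmult: "As I (\<lambda>z. c * f z) y = c * As I f y"
  unfolding As_def by (simp add: sum_distrib_left mult.left_commute)

lemma As_cong: "(\<And>\<pi>. \<pi> permutes I \<Longrightarrow> f (y \<circ> \<pi>) = g (y \<circ> \<pi>)) \<Longrightarrow> As I f y = As I g y"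
  unfolding As_def by (rule sum.cong) auto

lemma As_sub_zero:
  assumes fin: "finite I" and JI: "J \<subseteq> I"
    and gs: "\<And>\<pi> z. \<pi> permutes J \<Longrightarrow> g (z \<circ> \<pi>) = g z"
    and h0: "\<And>z. As J h z = 0"
  shows "As I (\<lambda>z. g z * h z) y = 0"
proof -
  let ?F = "\<lambda>z. g z * h z"
  have finJ: "finite J" using fin JI finite_subset by blast
  have key: "As I (\<lambda>z. g z * (of_int (sign p) * h (z \<circ> p))) y = As I ?F y" if p: "p permutes J" for p
  proof -
    have pI: "p permutes I" using permutes_subset[OF p JI] .
    have "As I (\<lambda>z. ?F (z \<circ> p)) y = of_int (sign p) * As I ?F y"
      by (rule As_reindex[OF fin pI])
    moreover have "(\<lambda>z. ?F (z \<circ> p)) = (\<lambda>z. g z * h (z \<circ> p))"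
      using gs[OF p] by simp
    ultimately have "As I (\<lambda>z. g z * h (z \<circ> p)) y = of_int (sign p) * As I ?F y" by simp
    then have "of_int (sign p) * As I (\<lambda>z. g z * h (z \<circ> p)) y = As I ?F y"
      by (simp add: mult.assoc[symmetric] sign_def)
    then show ?thesis
      by (simp add: As_cmult[symmetric] mult.left_commute)
  qed
  have "(\<Sum>p | p permutes J. As I (\<lambda>z. g z * (of_int (sign p) * h (z \<circ> p))) y) =
        of_nat (card {p. p permutes J}) * As I ?F y"
    using key by simp
  moreover have "(\<Sum>p | p permutes J. As I (\<lambda>z. g z * (of_int (sign p) * h (z \<circ> p))) y)
      = As I (\<lambda>z. g z * As J h z) y"
    by (simp add: As_def sum_distrib_left sum.swap[of _ "{p. p permutes J}"])
  moreover have "As I (\<lambda>z. g z * As J h z) y = 0" using h0 by (simp add: As_def)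
  moreover have "card {p. p permutes J} \<noteq> 0"
    using card_permutations[OF refl finJ] by simp
  ultimately show ?thesis by simp
qed

lemma As_transport:
  assumes bij: "bij_betw h {0..<m} S"
    and F: "\<And>z. F z = G (z \<circ> h)"
    and G: "\<And>z z'. (\<And>i. i < m \<Longrightarrow> z i = z' i) \<Longrightarrow> G z = G z'"
  shows "As S F y = As {0..<m} G (y \<circ> h)"
proof -
  let ?phi = "map_permutation {0..<m} h"
  let ?psi = "map_permutation S (inv_into {0..<m} h)"
  have inj: "inj_on h {0..<m}" using bij bij_betw_def by blast
  have bij2: "bij_betw (inv_into {0..<m} h) S {0..<m}" using bij_betw_inv_into[OF bij] .
  have bphi: "bij_betw ?phi {p. p permutes {0..<m}} {p. p permutes S}"
  proof (rule bij_betw_byWitness[where f' = ?psi])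
    show "\<forall>a\<in>{p. p permutes {0..<m}}. ?psi (?phi a) = a"
      using map_permutation_compose_inv[OF bij] inv_into_f_f[OF inj] by auto
    show "\<forall>a\<in>{p. p permutes S}. ?phi (?psi a) = a"
    proof
      fix a assume "a \<in> {p. p permutes S}"
      then have a: "a permutes S" by simp
      show "?phi (?psi a) = a"
        by (rule map_permutation_compose_inv[OF bij2 a])
           (use bij in \<open>auto simp: bij_betw_def f_inv_into_f\<close>)
    qed
    show "?phi ` {p. p permutes {0..<m}} \<subseteq> {p. p permutes S}"
      using map_permutation_permutes[OF bij] by blast
    show "?psi ` {p. p permutes S} \<subseteq> {p. p permutes {0..<m}}"
      using map_permutation_permutes[OF bij2] by blast
  qed
  have "As S F y = (\<Sum>p | p permutes {0..<m}. of_int (sign (?phi p)) * F (y \<circ> ?phi p))"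
    unfolding As_def by (rule sum.reindex_bij_betw[OF bphi, symmetric])
  also have "\<dots> = As {0..<m} G (y \<circ> h)"
    unfolding As_def
  proof (rule sum.cong[OF refl])
    fix p assume "p \<in> {p. p permutes {0..<m}}"
    then have p: "p permutes {0..<m}" by simp
    have "sign (?phi p) = sign p" by (rule sign_map_permutation[OF inj p]) simp
    moreover have "F (y \<circ> ?phi p) = G (y \<circ> h \<circ> p)"
      unfolding F
    proof (rule G)
      fix i assume i: "i < m"
      then have "p i \<in> {0..<m}" using permutes_in_image[OF p] by simp
      then show "(y \<circ> ?phi p \<circ> h) i = (y \<circ> h \<circ> p) i"
        using map_permutation_apply[OF inj, of i p] i by simp
    qed
    ultimately show "of_int (sign (?phi p)) * F (y \<circ> ?phi p) = of_int (sign p) * G (y \<circ> h \<circ> p)"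
      by simp
  qed
  finally show ?thesis .
qed

lemma det_diag:
  "det (mat n n (\<lambda>(i,j). if i = j then d i else 0)) = (\<Prod>i<n. (d i :: 'a :: comm_ring_1))"
proof -
  have "det (mat n n (\<lambda>(i,j). if i = j then d i else 0)) = prod_list (diag_mat (mat n n (\<lambda>(i,j). if i = j then d i else (0::'a))))"
    by (rule det_upper_triangular) (auto simp: upper_triangular_def)
  also have "\<dots> = (\<Prod>i<n. d i)"
    by (simp add: prod_list_diag_prod atLeast0LessThan)
  finally show ?thesis .
qed

lemma det_scale_cols:
  assumes A: "A \<in> carrier_mat n n"
  shows "det (mat n n (\<lambda>(i,j). A $$ (i,j) * d j)) = det A * (\<Prod>j<n. (d j :: 'a :: comm_ring_1))"
proof -
  have "mat n n (\<lambda>(i,j). A $$ (i,j) * d j) = A * mat n n (\<lambda>(i,j). if i = j then d i else 0)"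
  proof (rule eq_matI)
    fix i j assume i: "i < dim_row (A * mat n n (\<lambda>(i,j). if i = j then d i else 0))"
      and j: "j < dim_col (A * mat n n (\<lambda>(i,j). if i = j then d i else 0))"
    then have i': "i < n" and j': "j < n" using A by auto
    have "(A * mat n n (\<lambda>(i,j). if i = j then d i else 0)) $$ (i,j)
        = (\<Sum>k<n. A $$ (i,k) * (if k = j then d k else 0))"
      using i' j' A by (simp add: scalar_prod_def row_def col_def atLeast0LessThan)
    also have "\<dots> = A $$ (i,j) * d j"
      using j' by (simp add: if_distrib cong: if_cong)
    finally show "mat n n (\<lambda>(i,j). A $$ (i,j) * d j) $$ (i,j) = (A * mat n n (\<lambda>(i,j). if i = j then d i else 0)) $$ (i,j)"
      using i' j' by simp
  qed (use A in auto)
  also have "det \<dots> = det A * det (mat n n (\<lambda>(i,j). if i = j then d i else 0))"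
    by (rule det_mult[OF A]) auto
  finally show ?thesis by (simp add: det_diag)
qed

lemma det_scale_rows:
  assumes A: "A \<in> carrier_mat n n"
  shows "det (mat n n (\<lambda>(i,j). d i * A $$ (i,j))) = (\<Prod>i<n. (d i :: 'a :: comm_ring_1)) * det A"
proof -
  have "mat n n (\<lambda>(i,j). d i * A $$ (i,j)) = mat n n (\<lambda>(i,j). if i = j then d i else 0) * A"
  proof (rule eq_matI)
    fix i j assume i: "i < dim_row (mat n n (\<lambda>(i,j). if i = j then d i else 0) * A)"
      and j: "j < dim_col (mat n n (\<lambda>(i,j). if i = j then d i else 0) * A)"
    then have i': "i < n" and j': "j < n" using A by auto
    have "(mat n n (\<lambda>(i,j). if i = j then d i else 0) * A) $$ (i,j)
        = (\<Sum>k<n. (if i = k then d i else 0) * A $$ (k,j))"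
      using i' j' A by (simp add: scalar_prod_def row_def col_def atLeast0LessThan)
    also have "\<dots> = (\<Sum>k<n. if k = i then d i * A $$ (i,j) else 0)"
      by (rule sum.cong) auto
    also have "\<dots> = d i * A $$ (i,j)"
      using i' by simp
    finally show "mat n n (\<lambda>(i,j). d i * A $$ (i,j)) $$ (i,j) = (mat n n (\<lambda>(i,j). if i = j then d i else 0) * A) $$ (i,j)"
      using i' j' by simp
  qed (use A in auto)
  also have "det \<dots> = det (mat n n (\<lambda>(i,j). if i = j then d i else 0)) * det A"
    by (rule det_mult[OF _ A]) auto
  finally show ?thesis by (simp add: det_diag)
qed

definition vdm :: "nat \<Rightarrow> (nat \<Rightarrow> complex) \<Rightarrow> complex mat" where
  "vdm m y = mat m m (\<lambda>(r,p). y p ^ r)"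

definition V :: "nat \<Rightarrow> (nat \<Rightarrow> complex) \<Rightarrow> complex" where
  "V m y = det (vdm m y)"

lemma vdm_carrier[simp]: "vdm m y \<in> carrier_mat m m"
  by (simp add: vdm_def)

lemma V_Suc: "V (Suc m) y = V m y * (\<Prod>p<m. y m - y p)"
proof -
  let ?n = "Suc m"
  let ?A = "vdm ?n y"
  let ?L = "mat ?n ?n (\<lambda>(i,j). if i = j then 1 else if i = Suc j then - y m else (0::complex))"
  let ?B = "?L * ?A"
  have Lc: "?L \<in> carrier_mat ?n ?n" by simp
  have detL: "det ?L = 1"
  proof -
    have "det ?L = prod_list (diag_mat ?L)"
      by (rule det_lower_triangular[of ?n]) auto
    also have "\<dots> = 1" by (simp add: prod_list_diag_prod)
    finally show ?thesis .
  qed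
  have Bc: "?B \<in> carrier_mat ?n ?n" by (rule mult_carrier_mat[OF Lc vdm_carrier])
  have Bent: "?B $$ (r,p) = (if r = 0 then 1 else y p ^ (r - 1) * (y p - y m))" if r: "r < ?n" and p: "p < ?n" for r p
  proof -
    have "?B $$ (r,p) = (\<Sum>i<?n. (if r = i then 1 else if r = Suc i then - y m else 0) * y p ^ i)"
      using r p by (simp add: vdm_def scalar_prod_def row_def col_def atLeast0LessThan)
    also have "\<dots> = (\<Sum>i<?n. (if i = r then y p ^ i else 0) + (if Suc i = r then - y m * y p ^ i else 0))"
      by (rule sum.cong) auto
    also have "\<dots> = y p ^ r + (if r = 0 then 0 else - y m * y p ^ (r - 1))"
    proof -
      have "(\<Sum>i<?n. (if Suc i = r then - y m * y p ^ i else 0)) = (if r = 0 then 0 else - y m * y p ^ (r - 1))"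
      proof (cases r)
        case 0 then show ?thesis by simp
      next
        case (Suc r')
        then have "(\<Sum>i<?n. (if Suc i = r then - y m * y p ^ i else 0)) = (\<Sum>i<?n. (if i = r' then - y m * y p ^ i else 0))"
          by (intro sum.cong) auto
        also have "\<dots> = - y m * y p ^ r'" using r Suc by simp
        finally show ?thesis using Suc by simp
      qed
      then show ?thesis using r by (simp add: sum.distrib)
    qed
    also have "\<dots> = (if r = 0 then 1 else y p ^ (r - 1) * (y p - y m))"
      by (cases r) (auto simp: algebra_simps)
    finally show ?thesis .
  qed
  have "det ?B = det ?A"
    using det_mult[OF Lc vdm_carrier] detL by simp
  have "det ?B = (\<Sum>i<?n. ?B $$ (i, m) * cofactor ?B i m)"
    by (rule laplace_expansion_column[OF Bc]) simp
  also have "\<dots> = ?B $$ (0, m) * cofactor ?B 0 m + (\<Sum>i<m. ?B $$ (Suc i, m) * cofactor ?B (Suc i) m)"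
    by (rule sum.lessThan_Suc_shift)
  also have "(\<Sum>i<m. ?B $$ (Suc i, m) * cofactor ?B (Suc i) m) = 0"
    by (rule sum.neutral) (auto simp: Bent)
  also have "?B $$ (0, m) = 1" by (simp add: Bent)
  also have "cofactor ?B 0 m = (-1)^m * det (mat_delete ?B 0 m)"
    by (simp add: cofactor_def)
  also have "mat_delete ?B 0 m = mat m m (\<lambda>(r,p). vdm m y $$ (r,p) * (y p - y m))"
  proof (rule eq_matI)
    fix i j assume "i < dim_row (mat m m (\<lambda>(r,p). vdm m y $$ (r,p) * (y p - y m)))"
      "j < dim_col (mat m m (\<lambda>(r,p). vdm m y $$ (r,p) * (y p - y m)))"
    then have ij: "i < m" "j < m" by auto
    have "mat_delete ?B 0 m $$ (i,j) = ?B $$ (Suc i, j)"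
      using mat_delete_index[OF Bc, of 0 m i j] ij by simp
    also have "\<dots> = y j ^ i * (y j - y m)" using Bent[of "Suc i" j] ij by simp
    finally show "mat_delete ?B 0 m $$ (i,j) = mat m m (\<lambda>(r,p). vdm m y $$ (r,p) * (y p - y m)) $$ (i,j)"
      using ij by (simp add: vdm_def)
  qed (auto simp: mat_delete_def vdm_def)
  also have "det \<dots> = V m y * (\<Prod>p<m. y p - y m)"
    unfolding V_def by (rule det_scale_cols) simp
  finally have "V (Suc m) y = (-1)^m * (V m y * (\<Prod>p<m. y p - y m))"
    using \<open>det ?B = det ?A\<close> by (simp add: V_def)
  also have "(\<Prod>p<m. y m - y p) = (-1)^m * (\<Prod>p<m. y p - y m)"
    using prod_uminus[of "\<lambda>p. y p - y m" "{..<m}"] by simp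
  ultimately show ?thesis by simp
qed

lemma V_prod: "V m y = (\<Prod>k<m. \<Prod>j<k. y k - y j)"
proof (induction m)
  case 0
  have "V 0 y = 1" unfolding V_def by (rule det_dim_zero) simp
  then show ?case by simp
next
  case (Suc m)
  then show ?case by (simp add: V_Suc)
qed

lemma V_nonzero: assumes "inj_on y {0..<m}" shows "V m y \<noteq> 0"
proof -
  have "y k - y j \<noteq> 0" if "k < m" "j < k" for k j
    using assms that unfolding inj_on_def by (metis atLeastLessThan_iff eq_iff_diff_eq_0 less_trans not_less_iff_gr_or_eq zero_le)
  then show ?thesis unfolding V_prod by (simp add: prod_zero_iff)
qed

lemma V_cong: "(\<And>i. i < m \<Longrightarrow> y i = y' i) \<Longrightarrow> V m y = V m y'"
  unfolding V_prod by (intro prod.cong refl) auto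

lemma poly_sum_lt:
  fixes p :: "complex poly"
  assumes "degree p < n"
  shows "poly p z = (\<Sum>s<n. coeff p s * z ^ s)"
proof -
  have "poly p z = (\<Sum>s\<le>degree p. coeff p s * z ^ s)" by (rule poly_altdef)
  also have "\<dots> = (\<Sum>s<n. coeff p s * z ^ s)"
    by (rule sum.mono_neutral_left) (use assms in \<open>auto simp: coeff_eq_0\<close>)
  finally show ?thesis .
qed

lemma prod_insert_index:
  assumes "p < Suc k"
  shows "(\<Prod>q<k. g (insert_index p q)) = (\<Prod>l\<in>{0..<Suc k}-{p}. g l)"
proof -
  have "(\<Prod>l\<in>{0..<Suc k}-{p}. g l) = (\<Prod>l\<in>insert_index p ` {0..<k}. g l)"
    using insert_index_image[OF assms] by simp
  also have "\<dots> = (\<Prod>q\<in>{0..<k}. g (insert_index p q))"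
    by (rule prod.reindex[OF insert_index_inj_on, unfolded comp_def])
  finally show ?thesis by (simp add: atLeast0LessThan)
qed

lemma V_row_expand:
  fixes f :: "complex poly"
  assumes deg: "degree f < Suc k"
  shows "(\<Sum>p<Suc k. (-1)^p * poly f (y p) * (\<Prod>l\<in>{0..<Suc k}-{p}. y l) * V k (y \<circ> insert_index p))
         = poly f 0 * V (Suc k) y"
proof -
  let ?n = "Suc k"
  let ?A = "mat ?n ?n (\<lambda>(r,p). if r = 0 then poly f (y p) else y p ^ r)"
  let ?C = "mat ?n ?n (\<lambda>(r,s). if r = 0 then coeff f s else if r = s then 1 else (0::complex))"
  have Ac: "?A \<in> carrier_mat ?n ?n" by simp
  have "det ?A = (\<Sum>p<?n. ?A $$ (0,p) * cofactor ?A 0 p)"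
    by (rule laplace_expansion_row[OF Ac]) simp
  also have "\<dots> = (\<Sum>p<Suc k. (-1)^p * poly f (y p) * (\<Prod>l\<in>{0..<Suc k}-{p}. y l) * V k (y \<circ> insert_index p))"
  proof (rule sum.cong[OF refl])
    fix p assume "p \<in> {..<?n}"
    then have p: "p < ?n" by simp
    have md: "mat_delete ?A 0 p = mat k k (\<lambda>(r,q). vdm k (y \<circ> insert_index p) $$ (r,q) * y (insert_index p q))"
    proof (rule eq_matI)
      fix i j assume "i < dim_row (mat k k (\<lambda>(r,q). vdm k (y \<circ> insert_index p) $$ (r,q) * y (insert_index p q)))"
        "j < dim_col (mat k k (\<lambda>(r,q). vdm k (y \<circ> insert_index p) $$ (r,q) * y (insert_index p q)))"
      then have ij: "i < k" "j < k" by auto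
      have "mat_delete ?A 0 p $$ (i,j) = ?A $$ (insert_index 0 i, insert_index p j)"
        using mat_delete_index[OF Ac, of 0 p i j] ij p by simp
      also have "\<dots> = y (insert_index p j) ^ Suc i"
        using ij p by (simp add: insert_index_def)
      finally show "mat_delete ?A 0 p $$ (i,j) = mat k k (\<lambda>(r,q). vdm k (y \<circ> insert_index p) $$ (r,q) * y (insert_index p q)) $$ (i,j)"
        using ij by (simp add: vdm_def)
    qed (auto simp: mat_delete_def)
    have "cofactor ?A 0 p = (-1)^p * (V k (y \<circ> insert_index p) * (\<Prod>q<k. y (insert_index p q)))"
      unfolding cofactor_def md V_def by (simp add: det_scale_cols)
    then show "?A $$ (0,p) * cofactor ?A 0 p = (-1)^p * poly f (y p) * (\<Prod>l\<in>{0..<Suc k}-{p}. y l) * V k (y \<circ> insert_index p)"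
      using p prod_insert_index[OF p, of y] by simp
  qed
  finally have lhs: "det ?A = (\<Sum>p<Suc k. (-1)^p * poly f (y p) * (\<Prod>l\<in>{0..<Suc k}-{p}. y l) * V k (y \<circ> insert_index p))" .
  have "?A = ?C * vdm ?n y"
  proof (rule eq_matI)
    fix r p assume "r < dim_row (?C * vdm ?n y)" "p < dim_col (?C * vdm ?n y)"
    then have rp: "r < ?n" "p < ?n" by (auto simp: vdm_def)
    have "(?C * vdm ?n y) $$ (r,p) = (\<Sum>s<?n. ?C $$ (r,s) * y p ^ s)"
      using rp by (simp add: vdm_def scalar_prod_def row_def col_def atLeast0LessThan)
    also have "\<dots> = (if r = 0 then poly f (y p) else y p ^ r)"
    proof (cases "r = 0")
      case True
      then show ?thesis using poly_sum_lt[OF deg, of "y p"] by simp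
    next
      case False
      then have "(\<Sum>s<?n. ?C $$ (r,s) * y p ^ s) = (\<Sum>s<?n. if s = r then y p ^ r else 0)"
        using rp by (intro sum.cong) auto
      then show ?thesis using False rp by simp
    qed
    finally show "?A $$ (r,p) = (?C * vdm ?n y) $$ (r,p)" using rp by simp
  qed (auto simp: vdm_def)
  then have "det ?A = det ?C * V ?n y"
    unfolding V_def by (simp add: det_mult[of ?C ?n])
  moreover have "det ?C = poly f 0"
  proof -
    have "det ?C = prod_list (diag_mat ?C)"
      by (rule det_upper_triangular) (auto simp: upper_triangular_def)
    also have "\<dots> = (\<Prod>i<?n. ?C $$ (i,i))" by (simp add: prod_list_diag_prod atLeast0LessThan)
    also have "\<dots> = (\<Prod>i<?n. if i = 0 then coeff f 0 else 1)"
      by (rule prod.cong) auto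
    also have "\<dots> = coeff f 0"
      by (simp only: prod.lessThan_Suc_shift) simp
    finally show ?thesis by (simp add: poly_0_coeff_0)
  qed
  ultimately show ?thesis using lhs by simp
qed

definition cc :: "complex \<Rightarrow> complex \<Rightarrow> complex \<Rightarrow> complex" where
  "cc t a b = a + b + t * a * b"

lemma cc_sym: "cc t a b = cc t b a"
  unfolding cc_def by (simp add: algebra_simps)

lemma cc_0[simp]: "cc t 0 b = b" "cc t a 0 = a"
  unfolding cc_def by simp_all

definition PhiC :: "nat \<Rightarrow> complex \<Rightarrow> (nat \<Rightarrow> complex) \<Rightarrow> (nat \<Rightarrow> complex) \<Rightarrow> complex" where
  "PhiC m t x y = As {0..<m} (\<lambda>z. \<Prod>j<m. \<Prod>k\<in>{0..<m}-{j}. cc t (x j) (z k)) y"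

definition MM :: "nat \<Rightarrow> complex \<Rightarrow> (nat \<Rightarrow> complex) \<Rightarrow> (nat \<Rightarrow> complex) \<Rightarrow> complex mat" where
  "MM m t x y = mat m m (\<lambda>(j,k). \<Prod>l\<in>{0..<m}-{k}. cc t (x j) (y l))"

lemma MM_carrier[simp]: "MM m t x y \<in> carrier_mat m m"
  by (simp add: MM_def)

lemma bij_betw_remove1:
  assumes "p permutes A" "j \<in> A"
  shows "bij_betw p (A - {j}) (A - {p j})"
  by (rule bij_betw_DiffI[OF permutes_imp_bij[OF assms(1)]]) (use assms permutes_in_image[OF assms(1)] in auto)

lemma PhiC_det: "PhiC m t x y = det (MM m t x y)"
  unfolding PhiC_def As_def det_def'[OF MM_carrier]
proof (rule sum.cong[OF refl])
  fix p assume "p \<in> {p. p permutes {0..<m}}"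
  then have p: "p permutes {0..<m}" by simp
  have "(\<Prod>k\<in>{0..<m}-{j}. cc t (x j) ((y \<circ> p) k)) = MM m t x y $$ (j, p j)" if j: "j < m" for j
  proof -
    have "(\<Prod>k\<in>{0..<m}-{j}. cc t (x j) ((y \<circ> p) k)) = (\<Prod>l\<in>{0..<m}-{p j}. cc t (x j) (y l))"
      using prod.reindex_bij_betw[OF bij_betw_remove1[OF p], of j "\<lambda>l. cc t (x j) (y l)"] j
      by simp
    also have "\<dots> = MM m t x y $$ (j, p j)"
      using j permutes_in_image[OF p, of j] by (simp add: MM_def)
    finally show ?thesis .
  qed
  then show "of_int (sign p) * (\<Prod>j<m. \<Prod>k\<in>{0..<m}-{j}. cc t (x j) ((y \<circ> p) k)) =
         of_int (sign p) * (\<Prod>i = 0..<m. MM m t x y $$ (i, p i))"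
    by (simp add: atLeast0LessThan)
qed

lemma prod_pairs_swap:
  fixes m :: nat
  assumes p: "p permutes {0..<m}"
  shows "(\<Prod>i<m. \<Prod>l\<in>{0..<m}-{p i}. G i l) = (\<Prod>i<m. \<Prod>l\<in>{0..<m}-{inv_into UNIV p i}. G l i)"
proof -
  let ?S1 = "Sigma {..<m} (\<lambda>i. {0..<m}-{p i})"
  let ?S2 = "Sigma {..<m} (\<lambda>i. {0..<m}-{inv_into UNIV p i})"
  have "(\<Prod>i<m. \<Prod>l\<in>{0..<m}-{p i}. G i l) = (\<Prod>(i,l)\<in>?S1. G i l)"
    by (subst prod.Sigma) auto
  also have "\<dots> = (\<Prod>(i,l)\<in>?S2. G l i)"
  proof -
    have inv1: "i \<noteq> inv_into UNIV p l" if "l \<noteq> p i" for i l using that permutes_inverses[OF p] by metis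
    have inv2: "i \<noteq> p l" if "l \<noteq> inv_into UNIV p i" for i l using that permutes_inverses[OF p] by metis
    show ?thesis
      by (rule prod.reindex_bij_witness[where i = "\<lambda>(a,b). (b,a)" and j = "\<lambda>(a,b). (b,a)"])
         (auto intro: inv1 inv2 simp: permutes_inverses[OF p])
  qed
  also have "\<dots> = (\<Prod>i<m. \<Prod>l\<in>{0..<m}-{inv_into UNIV p i}. G l i)"
    by (subst prod.Sigma) auto
  finally show ?thesis .
qed

lemma MM_sym: "det (MM m t x y) = det (MM m t y x)"
proof -
  have bij: "bij_betw (inv_into UNIV) {p. p permutes {0..<m}} {p. p permutes {0..<m}}"
    by (rule bij_betw_byWitness[where f' = "inv_into UNIV"])
       (auto simp: permutes_inv permutes_inv_inv)
  have "det (MM m t y x) = (\<Sum>p | p permutes {0..<m}. signof p * (\<Prod>i = 0..<m. MM m t y x $$ (i, p i)))"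
    by (rule det_def'[OF MM_carrier])
  also have "\<dots> = (\<Sum>p | p permutes {0..<m}. signof (inv_into UNIV p) * (\<Prod>i = 0..<m. MM m t y x $$ (i, inv_into UNIV p i)))"
    by (rule sum.reindex_bij_betw[OF bij, symmetric])
  also have "\<dots> = (\<Sum>p | p permutes {0..<m}. signof p * (\<Prod>i = 0..<m. MM m t x y $$ (i, p i)))"
  proof (rule sum.cong[OF refl])
    fix p assume "p \<in> {p. p permutes {0..<m}}"
    then have p: "p permutes {0..<m}" by simp
    have pp: "permutation p" using p permutation_permutes by blast
    have s: "sign (inv_into UNIV p) = sign p" using sign_inverse[OF pp] by simp
    have "(\<Prod>i = 0..<m. MM m t y x $$ (i, inv_into UNIV p i)) = (\<Prod>i<m. \<Prod>l\<in>{0..<m}-{inv_into UNIV p i}. cc t (y i) (x l))"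
      using permutes_in_image[OF permutes_inv[OF p]] by (simp add: MM_def atLeast0LessThan)
    also have "\<dots> = (\<Prod>i<m. \<Prod>l\<in>{0..<m}-{p i}. cc t (x i) (y l))"
      using prod_pairs_swap[OF p, of "\<lambda>i l. cc t (x i) (y l)"] by (simp add: cc_sym)
    also have "\<dots> = (\<Prod>i = 0..<m. MM m t x y $$ (i, p i))"
      using permutes_in_image[OF p] by (simp add: MM_def atLeast0LessThan)
    finally show "signof (inv_into UNIV p) * (\<Prod>i = 0..<m. MM m t y x $$ (i, inv_into UNIV p i)) =
        signof p * (\<Prod>i = 0..<m. MM m t x y $$ (i, p i))" using s by simp
  qed
  also have "\<dots> = det (MM m t x y)" by (rule det_def'[OF MM_carrier, symmetric])
  finally show ?thesis by simp
qed

definition PP :: "nat \<Rightarrow> complex \<Rightarrow> (nat \<Rightarrow> complex) \<Rightarrow> nat \<Rightarrow> complex poly" where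
  "PP m t y k = (\<Prod>l\<in>{0..<m}-{k}. [:y l, 1 + t * y l:])"

definition NN :: "nat \<Rightarrow> complex \<Rightarrow> (nat \<Rightarrow> complex) \<Rightarrow> complex mat" where
  "NN m t y = mat m m (\<lambda>(r,k). coeff (PP m t y k) r)"

lemma degree_PP: "k < m \<Longrightarrow> degree (PP m t y k) < m"
proof -
  assume k: "k < m"
  have "degree (PP m t y k) \<le> (\<Sum>l\<in>{0..<m}-{k}. degree [:y l, 1 + t * y l:])"
    using degree_prod_sum_le[of "{0..<m}-{k}" "\<lambda>l. [:y l, 1 + t*y l:]"] by (simp add: PP_def o_def)
  also have "\<dots> \<le> (\<Sum>l\<in>{0..<m}-{k}. 1)"
    by (rule sum_mono) simp
  also have "\<dots> = m - 1" using k by simp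
  finally show ?thesis using k by simp
qed

lemma poly_PP: "poly (PP m t y k) z = (\<Prod>l\<in>{0..<m}-{k}. cc t z (y l))"
  unfolding PP_def poly_prod by (rule prod.cong) (auto simp: cc_def algebra_simps)

lemma MM_factor: "det (MM m t x y) = V m x * det (NN m t y)"
proof -
  have "MM m t x y = transpose_mat (vdm m x) * NN m t y"
  proof (rule eq_matI)
    fix j k assume "j < dim_row (transpose_mat (vdm m x) * NN m t y)" "k < dim_col (transpose_mat (vdm m x) * NN m t y)"
    then have jk: "j < m" "k < m" by (auto simp: NN_def vdm_def)
    have "(transpose_mat (vdm m x) * NN m t y) $$ (j,k) = (\<Sum>r<m. coeff (PP m t y k) r * x j ^ r)"
      using jk by (simp add: vdm_def NN_def scalar_prod_def row_def col_def atLeast0LessThan mult.commute)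
    also have "\<dots> = poly (PP m t y k) (x j)"
      using poly_sum_lt[OF degree_PP[OF jk(2)]] by simp
    also have "\<dots> = MM m t x y $$ (j,k)"
      using jk by (simp add: poly_PP MM_def)
    finally show "MM m t x y $$ (j,k) = (transpose_mat (vdm m x) * NN m t y) $$ (j,k)" by simp
  qed (auto simp: MM_def NN_def vdm_def)
  also have "det \<dots> = det (transpose_mat (vdm m x)) * det (NN m t y)"
    by (rule det_mult[of _ m]) (auto simp: NN_def vdm_def)
  also have "det (transpose_mat (vdm m x)) = V m x"
    unfolding V_def by (rule det_transpose[OF vdm_carrier])
  finally show ?thesis .
qed

lemma MM_special:
  assumes "x m = 0" "y m = 0"
  shows "det (MM (Suc m) t x y) = (\<Prod>l<m. y l) * ((\<Prod>j<m. x j) * det (MM m t x y))"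
proof -
  have row: "MM (Suc m) t x y $$ (m,k) = (if k = m then (\<Prod>l<m. y l) else 0)" if k: "k < Suc m" for k
  proof -
    have "MM (Suc m) t x y $$ (m,k) = (\<Prod>l\<in>{0..<Suc m}-{k}. y l)"
      using k assms by (simp add: MM_def)
    also have "\<dots> = (if k = m then (\<Prod>l<m. y l) else 0)"
    proof (cases "k = m")
      case True
      have "{0..<Suc m}-{m} = {..<m}" by auto
      then show ?thesis using True by simp
    next
      case False
      have "m \<in> {0..<Suc m}-{k}" using False by simp
      then have "(\<Prod>l\<in>{0..<Suc m}-{k}. y l) = 0"
        using assms(2) by (intro prod_zero) auto
      then show ?thesis using False by simp
    qed
    finally show ?thesis .
  qed
  have "det (MM (Suc m) t x y) = (\<Sum>k<Suc m. MM (Suc m) t x y $$ (m,k) * cofactor (MM (Suc m) t x y) m k)"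
    by (rule laplace_expansion_row) auto
  also have "\<dots> = (\<Prod>l<m. y l) * cofactor (MM (Suc m) t x y) m m"
    by (simp add: row)
  also have "cofactor (MM (Suc m) t x y) m m = det (mat_delete (MM (Suc m) t x y) m m)"
    by (simp add: cofactor_def)
  also have "mat_delete (MM (Suc m) t x y) m m = mat m m (\<lambda>(j,k). x j * MM m t x y $$ (j,k))"
  proof (rule eq_matI)
    fix j k assume "j < dim_row (mat m m (\<lambda>(j,k). x j * MM m t x y $$ (j,k)))" "k < dim_col (mat m m (\<lambda>(j,k). x j * MM m t x y $$ (j,k)))"
    then have jk: "j < m" "k < m" by auto
    have "mat_delete (MM (Suc m) t x y) m m $$ (j,k) = MM (Suc m) t x y $$ (j,k)"
      using mat_delete_index[OF MM_carrier[of "Suc m" t x y], of m m j k] jk by simp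
    also have "\<dots> = (\<Prod>l\<in>insert m ({0..<m}-{k}). cc t (x j) (y l))"
    proof -
      have "{0..<Suc m}-{k} = insert m ({0..<m}-{k})" using jk by auto
      then show ?thesis using jk by (simp add: MM_def)
    qed
    also have "\<dots> = x j * MM m t x y $$ (j,k)"
      using jk assms by (simp add: MM_def)
    finally show "mat_delete (MM (Suc m) t x y) m m $$ (j,k) = mat m m (\<lambda>(j,k). x j * MM m t x y $$ (j,k)) $$ (j,k)"
      using jk by simp
  qed (auto simp: mat_delete_def MM_def)
  also have "det \<dots> = (\<Prod>j<m. x j) * det (MM m t x y)"
    by (rule det_scale_rows) simp
  finally show ?thesis .
qed

lemma PhiC_VV: "PhiC m t x y = V m x * V m y"
proof (induction m arbitrary: x y)
  case 0
  have "PhiC 0 t x y = 1" unfolding PhiC_def As_def by (simp add: permutes_empty)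
  moreover have "V 0 z = 1" for z unfolding V_prod by simp
  ultimately show ?case by simp
next
  case (Suc m)
  let ?D = "\<lambda>y. det (NN (Suc m) t y)"
  let ?w = "\<lambda>i. of_nat i :: complex"
  have Vw: "V (Suc m) ?w \<noteq> 0" by (rule V_nonzero) (auto simp: inj_on_def)
  have sym: "V (Suc m) a * ?D b = V (Suc m) b * ?D a" for a b
    using MM_sym[of "Suc m" t a b] MM_factor[of "Suc m" t a b] MM_factor[of "Suc m" t b a] by simp
  define \<kappa> where "\<kappa> = ?D ?w / V (Suc m) ?w"
  have Dk: "?D b = \<kappa> * V (Suc m) b" for b
    using sym[of ?w b] Vw unfolding \<kappa>_def by (simp add: field_simps)
  have Phik: "PhiC (Suc m) t a b = \<kappa> * V (Suc m) a * V (Suc m) b" for a b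
    using PhiC_det MM_factor Dk by simp
  define u where "u = (\<lambda>i. if i < m then of_nat (Suc i) else (0::complex))"
  have um: "u m = 0" by (simp add: u_def)
  have Vu: "V m u \<noteq> 0" by (rule V_nonzero) (auto simp: inj_on_def u_def)
  have Pu: "(\<Prod>l<m. u l) \<noteq> 0" by (simp add: u_def prod_zero_iff del: of_nat_Suc)
  have "PhiC (Suc m) t u u = (\<Prod>l<m. u l) * ((\<Prod>j<m. u j) * PhiC m t u u)"
    using MM_special[of u m u t, OF um um] PhiC_det by simp
  also have "\<dots> = ((\<Prod>l<m. u l) * V m u)^2"
    using Suc.IH[of u u] by (simp add: power2_eq_square)
  finally have e1: "PhiC (Suc m) t u u = ((\<Prod>l<m. u l) * V m u)^2" .
  have "V (Suc m) u = V m u * (\<Prod>p<m. - u p)"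
    using V_Suc[of m u] um by simp
  also have "\<dots> = V m u * ((-1)^m * (\<Prod>p<m. u p))"
    using prod_uminus[of u "{..<m}"] by simp
  finally have "(V (Suc m) u)^2 = ((\<Prod>l<m. u l) * V m u)^2"
    by (simp add: power_mult_distrib power2_eq_square algebra_simps)
  with e1 Phik[of u u] have "\<kappa> * ((\<Prod>l<m. u l) * V m u)^2 = ((\<Prod>l<m. u l) * V m u)^2"
    by (simp add: power2_eq_square mult.assoc)
  moreover have "((\<Prod>l<m. u l) * V m u)^2 \<noteq> 0" using Vu Pu by simp
  ultimately have "\<kappa> = 1" by simp
  then show ?case using Phik by simp
qed

lemma sum_perm_insert:
  assumes i: "i < Suc k"
  shows "(\<Sum>\<pi> | \<pi> permutes {0..<Suc k}. h \<pi>) =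
         (\<Sum>p<Suc k. \<Sum>q | q permutes {0..<k}. h (permutation_insert i p q))"
proof -
  let ?P = "{\<pi>. \<pi> permutes {0..<Suc k}}"
  have "(\<Sum>\<pi>\<in>?P. h \<pi>) = (\<Sum>p<Suc k. \<Sum>\<pi>\<in>{\<pi>. \<pi> \<in> ?P \<and> \<pi> i = p}. h \<pi>)"
  proof (rule sum.group[symmetric])
    show "finite ?P" by (rule finite_permutations) simp
    show "(\<lambda>\<pi>. \<pi> i) ` ?P \<subseteq> {..<Suc k}"
      using i by (auto dest: permutes_in_image[where x = i])
  qed simp
  also have "\<dots> = (\<Sum>p<Suc k. \<Sum>q | q permutes {0..<k}. h (permutation_insert i p q))"
  proof (rule sum.cong[OF refl])
    fix p assume "p \<in> {..<Suc k}"
    then have p: "p < Suc k" by simp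
    have "{\<pi>. \<pi> \<in> ?P \<and> \<pi> i = p} = permutation_insert i p ` {q. q permutes {0..<k}}"
      using permutation_fix[OF i p] by simp
    then show "(\<Sum>\<pi>\<in>{\<pi>. \<pi> \<in> ?P \<and> \<pi> i = p}. h \<pi>) = (\<Sum>q | q permutes {0..<k}. h (permutation_insert i p q))"
      using sum.reindex[OF permutation_insert_inj_on[OF i p], of h] by (simp add: comp_def)
  qed
  finally show ?thesis .
qed

lemma perm_ins_apply: "permutation_insert i p q (insert_index i a) = insert_index p (q a)"
  unfolding permutation_insert_expand insert_index_def by auto

lemma ins_image_diff:
  assumes i: "i < Suc k" and a: "a < k"
  shows "{0..<Suc k} - {i, insert_index i a} = insert_index i ` ({0..<k} - {a})"
proof -
  have "insert_index i ` ({0..<k} - {a}) = insert_index i ` {0..<k} - insert_index i ` {a}"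
    by (rule inj_on_image_set_diff[OF insert_index_inj_on]) (use a in auto)
  also have "\<dots> = {0..<Suc k} - {i} - {insert_index i a}"
    using insert_index_image[OF i] by simp
  finally show ?thesis by auto
qed

definition ee :: "complex \<Rightarrow> complex \<Rightarrow> complex \<Rightarrow> complex" where
  "ee t a b = (1 + t * a) * (1 + t * b) - a * b"

definition termL :: "nat \<Rightarrow> complex \<Rightarrow> (nat \<Rightarrow> complex) \<Rightarrow> nat \<Rightarrow> (nat \<Rightarrow> complex) \<Rightarrow> complex" where
  "termL m t x i z = ee t (x i) (z i) ^ (m - 1) * (\<Prod>k\<in>{0..<m}-{i}. x k * z k) *
      (\<Prod>j\<in>{0..<m}-{i}. \<Prod>k\<in>{0..<m}-{i,j}. cc t (x j) (z k))"

lemma termL_As: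
  assumes i: "i < Suc k"
  shows "As {0..<Suc k} (termL (Suc k) t x i) y =
    (-1)^i * (\<Prod>l\<in>{0..<Suc k}-{i}. x l) * V k (x \<circ> insert_index i) *
    (\<Sum>p<Suc k. (-1)^p * ee t (x i) (y p) ^ k * (\<Prod>l\<in>{0..<Suc k}-{p}. y l) * V k (y \<circ> insert_index p))"
proof -
  have "As {0..<Suc k} (termL (Suc k) t x i) y =
     (\<Sum>p<Suc k. \<Sum>q | q permutes {0..<k}. of_int (sign (permutation_insert i p q)) *
        termL (Suc k) t x i (y \<circ> permutation_insert i p q))"
    unfolding As_def by (rule sum_perm_insert[OF i])
  also have "\<dots> = (\<Sum>p<Suc k. (-1)^i * (\<Prod>l\<in>{0..<Suc k}-{i}. x l) * V k (x \<circ> insert_index i) *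
      ((-1)^p * ee t (x i) (y p) ^ k * (\<Prod>l\<in>{0..<Suc k}-{p}. y l) * V k (y \<circ> insert_index p)))"
  proof (rule sum.cong[OF refl])
    fix p assume "p \<in> {..<Suc k}"
    then have p: "p < Suc k" by simp
    let ?x = "x \<circ> insert_index i" and ?y = "y \<circ> insert_index p"
    have eq: "of_int (sign (permutation_insert i p q)) * termL (Suc k) t x i (y \<circ> permutation_insert i p q) =
       ((-1)^(i+p) * ee t (x i) (y p) ^ k * (\<Prod>l\<in>{0..<Suc k}-{i}. x l) * (\<Prod>l\<in>{0..<Suc k}-{p}. y l)) *
       (of_int (sign q) * (\<Prod>a<k. \<Prod>b\<in>{0..<k}-{a}. cc t (?x a) ((?y \<circ> q) b)))"
      if q: "q permutes {0..<k}" for q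
    proof -
      let ?\<pi> = "permutation_insert i p q"
      have s: "(of_int (sign ?\<pi>) :: complex) = (-1)^(i+p) * of_int (sign q)"
        using signof_permutation_insert[OF q i p] by simp
      have pi_i: "?\<pi> i = p" by simp
      have P1: "(\<Prod>k'\<in>{0..<Suc k}-{i}. x k' * (y \<circ> ?\<pi>) k') = (\<Prod>l\<in>{0..<Suc k}-{i}. x l) * (\<Prod>l\<in>{0..<Suc k}-{p}. y l)"
      proof -
        have "(\<Prod>k'\<in>{0..<Suc k}-{i}. y (?\<pi> k')) = (\<Prod>a<k. y (?\<pi> (insert_index i a)))"
          using prod_insert_index[OF i, of "\<lambda>k'. y (?\<pi> k')"] by simp
        also have "\<dots> = (\<Prod>a<k. ?y (q a))" by (simp add: perm_ins_apply)
        also have "\<dots> = (\<Prod>a<k. ?y a)"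
          using prod.permute[OF q, of ?y] by (simp add: atLeast0LessThan comp_def)
        also have "\<dots> = (\<Prod>l\<in>{0..<Suc k}-{p}. y l)"
          using prod_insert_index[OF p, of y] by simp
        finally show ?thesis by (simp add: prod.distrib)
      qed
      have P2: "(\<Prod>j\<in>{0..<Suc k}-{i}. \<Prod>k'\<in>{0..<Suc k}-{i,j}. cc t (x j) ((y \<circ> ?\<pi>) k')) =
          (\<Prod>a<k. \<Prod>b\<in>{0..<k}-{a}. cc t (?x a) ((?y \<circ> q) b))"
      proof -
        have "(\<Prod>j\<in>{0..<Suc k}-{i}. \<Prod>k'\<in>{0..<Suc k}-{i,j}. cc t (x j) ((y \<circ> ?\<pi>) k')) =
          (\<Prod>a<k. \<Prod>k'\<in>{0..<Suc k}-{i,insert_index i a}. cc t (x (insert_index i a)) ((y \<circ> ?\<pi>) k'))"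
          using prod_insert_index[OF i, of "\<lambda>j. \<Prod>k'\<in>{0..<Suc k}-{i,j}. cc t (x j) ((y \<circ> ?\<pi>) k')"] by simp
        also have "\<dots> = (\<Prod>a<k. \<Prod>b\<in>{0..<k}-{a}. cc t (?x a) ((?y \<circ> q) b))"
        proof (rule prod.cong[OF refl])
          fix a assume "a \<in> {..<k}"
          then have a: "a < k" by simp
          have "(\<Prod>k'\<in>{0..<Suc k}-{i,insert_index i a}. cc t (x (insert_index i a)) ((y \<circ> ?\<pi>) k'))
              = (\<Prod>k'\<in>insert_index i ` ({0..<k}-{a}). cc t (x (insert_index i a)) ((y \<circ> ?\<pi>) k'))"
            using ins_image_diff[OF i a] by simp
          also have "\<dots> = (\<Prod>b\<in>{0..<k}-{a}. cc t (x (insert_index i a)) ((y \<circ> ?\<pi>) (insert_index i b)))"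
            by (rule prod.reindex[OF insert_index_inj_on, unfolded comp_def])
          also have "\<dots> = (\<Prod>b\<in>{0..<k}-{a}. cc t (?x a) ((?y \<circ> q) b))"
            by (simp add: perm_ins_apply)
          finally show "(\<Prod>k'\<in>{0..<Suc k}-{i,insert_index i a}. cc t (x (insert_index i a)) ((y \<circ> ?\<pi>) k'))
              = (\<Prod>b\<in>{0..<k}-{a}. cc t (?x a) ((?y \<circ> q) b))" .
        qed
        finally show ?thesis .
      qed
      show ?thesis
        unfolding termL_def s P1 P2 by (simp add: pi_i)
    qed
    have "(\<Sum>q | q permutes {0..<k}. of_int (sign (permutation_insert i p q)) * termL (Suc k) t x i (y \<circ> permutation_insert i p q))
      = ((-1)^(i+p) * ee t (x i) (y p) ^ k * (\<Prod>l\<in>{0..<Suc k}-{i}. x l) * (\<Prod>l\<in>{0..<Suc k}-{p}. y l)) * PhiC k t ?x ?y"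
      unfolding PhiC_def As_def sum_distrib_left
      by (rule sum.cong[OF refl]) (simp add: eq atLeast0LessThan)
    also have "\<dots> = (-1)^i * (\<Prod>l\<in>{0..<Suc k}-{i}. x l) * V k ?x *
      ((-1)^p * ee t (x i) (y p) ^ k * (\<Prod>l\<in>{0..<Suc k}-{p}. y l) * V k ?y)"
      by (simp add: PhiC_VV power_add)
    finally show "(\<Sum>q | q permutes {0..<k}. of_int (sign (permutation_insert i p q)) * termL (Suc k) t x i (y \<circ> permutation_insert i p q))
      = (-1)^i * (\<Prod>l\<in>{0..<Suc k}-{i}. x l) * V k ?x *
      ((-1)^p * ee t (x i) (y p) ^ k * (\<Prod>l\<in>{0..<Suc k}-{p}. y l) * V k ?y)" .
  qed
  also have "\<dots> = (-1)^i * (\<Prod>l\<in>{0..<Suc k}-{i}. x l) * V k (x \<circ> insert_index i) *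
    (\<Sum>p<Suc k. (-1)^p * ee t (x i) (y p) ^ k * (\<Prod>l\<in>{0..<Suc k}-{p}. y l) * V k (y \<circ> insert_index p))"
    by (rule sum_distrib_left[symmetric])
  finally show ?thesis .
qed

lemma degree_lin_pow: "degree ([:c0, c1:] ^ k) < Suc k" for c0 c1 :: complex
proof -
  have d1: "degree [:c0, c1:] \<le> 1" by (cases "c1 = 0") auto
  have "degree ([:c0, c1:] ^ k) \<le> degree [:c0, c1:] * k" by (rule degree_power_le)
  also have "\<dots> \<le> 1 * k" by (rule mult_right_mono[OF d1]) simp
  finally show ?thesis by simp
qed

lemma L0:
  "(\<Sum>i<Suc k. As {0..<Suc k} (termL (Suc k) t x i) y) = PhiC (Suc k) t x y"
proof -
  have inner: "(\<Sum>p<Suc k. (-1)^p * ee t (x i) (y p) ^ k * (\<Prod>l\<in>{0..<Suc k}-{p}. y l) * V k (y \<circ> insert_index p))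
      = (1 + t * x i)^k * V (Suc k) y" for i
  proof -
    let ?f = "[:1 + t * x i, t * (1 + t * x i) - x i:] ^ k"
    have pf: "poly ?f b = ee t (x i) b ^ k" for b
      by (simp add: ee_def algebra_simps)
    have df: "degree ?f < Suc k" by (rule degree_lin_pow)
    have "poly ?f 0 = (1 + t * x i)^k" by simp
    then show ?thesis using V_row_expand[OF df, of y] pf by simp
  qed
  have "(\<Sum>i<Suc k. As {0..<Suc k} (termL (Suc k) t x i) y) =
    (\<Sum>i<Suc k. ((-1)^i * (1 + t * x i)^k * (\<Prod>l\<in>{0..<Suc k}-{i}. x l) * V k (x \<circ> insert_index i)) * V (Suc k) y)"
  proof (rule sum.cong[OF refl])
    fix i assume "i \<in> {..<Suc k}"
    then have i: "i < Suc k" by simp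
    show "As {0..<Suc k} (termL (Suc k) t x i) y = ((-1)^i * (1 + t * x i)^k * (\<Prod>l\<in>{0..<Suc k}-{i}. x l) * V k (x \<circ> insert_index i)) * V (Suc k) y"
      unfolding termL_As[OF i] inner by (simp add: mult_ac)
  qed
  also have "\<dots> = (\<Sum>i<Suc k. (-1)^i * (1 + t * x i)^k * (\<Prod>l\<in>{0..<Suc k}-{i}. x l) * V k (x \<circ> insert_index i)) * V (Suc k) y"
    by (rule sum_distrib_right[symmetric])
  also have "(\<Sum>i<Suc k. (-1)^i * (1 + t * x i)^k * (\<Prod>l\<in>{0..<Suc k}-{i}. x l) * V k (x \<circ> insert_index i)) = V (Suc k) x"
  proof -
    let ?f = "[:1, t:] ^ k"
    have df: "degree ?f < Suc k" by (rule degree_lin_pow)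
    have "poly ?f b = (1 + t * b)^k" for b by (simp add: mult.commute)
    then show ?thesis using V_row_expand[OF df, of x] by simp
  qed
  finally show ?thesis by (simp add: PhiC_VV mult.commute)
qed

definition PsiS :: "complex \<Rightarrow> nat set \<Rightarrow> (nat \<Rightarrow> complex) \<Rightarrow> (nat \<Rightarrow> complex) \<Rightarrow> complex" where
  "PsiS t S x z = (\<Sum>i\<in>S. ee t (x i) (z i) ^ (card S - 1) * (\<Prod>k\<in>S-{i}. x k * z k) *
      (\<Prod>j\<in>S-{i}. \<Prod>k\<in>S-{i,j}. cc t (x j) (z k))) - (\<Prod>j\<in>S. \<Prod>k\<in>S-{j}. cc t (x j) (z k))"

lemma PsiS_cong:
  assumes "\<And>i. i \<in> S \<Longrightarrow> z i = z' i"
  shows "PsiS t S x z = PsiS t S x z'"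
  unfolding PsiS_def using assms by (simp cong: sum.cong_simp prod.cong_simp)

lemma PsiS_reindex:
  assumes inj: "inj_on h T"
  shows "PsiS t (h ` T) x z = PsiS t T (x \<circ> h) (z \<circ> h)"
proof -
  have im1: "h ` T - {h i} = h ` (T - {i})" if "i \<in> T" for i
    using inj that by (auto simp: inj_on_def)
  have im2: "h ` T - {h i, h j} = h ` (T - {i, j})" if "i \<in> T" "j \<in> T" for i j
    using inj that by (auto simp: inj_on_def)
  have inj1: "inj_on h (T - A)" for A using inj by (rule inj_on_subset) auto
  have card: "card (h ` T) = card T" using card_image[OF inj] .
  have A: "(\<Sum>i\<in>h ` T. ee t (x i) (z i) ^ (card (h ` T) - 1) * (\<Prod>k\<in>h ` T-{i}. x k * z k) *
      (\<Prod>j\<in>h ` T-{i}. \<Prod>k\<in>h ` T-{i,j}. cc t (x j) (z k)))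
    = (\<Sum>i\<in>T. ee t ((x \<circ> h) i) ((z \<circ> h) i) ^ (card T - 1) * (\<Prod>k\<in>T-{i}. (x \<circ> h) k * (z \<circ> h) k) *
      (\<Prod>j\<in>T-{i}. \<Prod>k\<in>T-{i,j}. cc t ((x \<circ> h) j) ((z \<circ> h) k)))"
  proof -
    have "(\<Sum>i\<in>h ` T. ee t (x i) (z i) ^ (card (h ` T) - 1) * (\<Prod>k\<in>h ` T-{i}. x k * z k) *
      (\<Prod>j\<in>h ` T-{i}. \<Prod>k\<in>h ` T-{i,j}. cc t (x j) (z k))) =
      (\<Sum>i\<in>T. ee t (x (h i)) (z (h i)) ^ (card (h ` T) - 1) * (\<Prod>k\<in>h ` T-{h i}. x k * z k) *
      (\<Prod>j\<in>h ` T-{h i}. \<Prod>k\<in>h ` T-{h i,j}. cc t (x j) (z k)))"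
      by (rule sum.reindex[OF inj, unfolded comp_def])
    also have "\<dots> = (\<Sum>i\<in>T. ee t ((x \<circ> h) i) ((z \<circ> h) i) ^ (card T - 1) * (\<Prod>k\<in>T-{i}. (x \<circ> h) k * (z \<circ> h) k) *
      (\<Prod>j\<in>T-{i}. \<Prod>k\<in>T-{i,j}. cc t ((x \<circ> h) j) ((z \<circ> h) k)))"
    proof (rule sum.cong[OF refl])
      fix i assume i: "i \<in> T"
      have p1: "(\<Prod>k\<in>h ` T-{h i}. x k * z k) = (\<Prod>k\<in>T-{i}. (x \<circ> h) k * (z \<circ> h) k)"
        unfolding im1[OF i] by (simp add: prod.reindex[OF inj1])
      have p2: "(\<Prod>j\<in>h ` T-{h i}. \<Prod>k\<in>h ` T-{h i,j}. cc t (x j) (z k)) =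
          (\<Prod>j\<in>T-{i}. \<Prod>k\<in>T-{i,j}. cc t ((x \<circ> h) j) ((z \<circ> h) k))"
      proof -
        have "(\<Prod>j\<in>h ` T-{h i}. \<Prod>k\<in>h ` T-{h i,j}. cc t (x j) (z k)) =
            (\<Prod>j\<in>T-{i}. \<Prod>k\<in>h ` T-{h i,h j}. cc t (x (h j)) (z k))"
          unfolding im1[OF i] by (rule prod.reindex[OF inj1, unfolded comp_def])
        also have "\<dots> = (\<Prod>j\<in>T-{i}. \<Prod>k\<in>T-{i,j}. cc t ((x \<circ> h) j) ((z \<circ> h) k))"
        proof (rule prod.cong[OF refl])
          fix j assume j: "j \<in> T - {i}"
          show "(\<Prod>k\<in>h ` T-{h i,h j}. cc t (x (h j)) (z k)) = (\<Prod>k\<in>T-{i,j}. cc t ((x \<circ> h) j) ((z \<circ> h) k))"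
          proof -
            have jT: "j \<in> T" using j by simp
            show ?thesis unfolding im2[OF i jT] by (simp add: prod.reindex[OF inj1])
          qed
        qed
        finally show ?thesis .
      qed
      show "ee t (x (h i)) (z (h i)) ^ (card (h ` T) - 1) * (\<Prod>k\<in>h ` T-{h i}. x k * z k) *
          (\<Prod>j\<in>h ` T-{h i}. \<Prod>k\<in>h ` T-{h i,j}. cc t (x j) (z k)) =
        ee t ((x \<circ> h) i) ((z \<circ> h) i) ^ (card T - 1) * (\<Prod>k\<in>T-{i}. (x \<circ> h) k * (z \<circ> h) k) *
          (\<Prod>j\<in>T-{i}. \<Prod>k\<in>T-{i,j}. cc t ((x \<circ> h) j) ((z \<circ> h) k))"
        using p1 p2 card by simp
    qed
    finally show ?thesis .
  qed
  have B: "(\<Prod>j\<in>h ` T. \<Prod>k\<in>h ` T-{j}. cc t (x j) (z k)) = (\<Prod>j\<in>T. \<Prod>k\<in>T-{j}. cc t ((x \<circ> h) j) ((z \<circ> h) k))"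
  proof -
    have "(\<Prod>j\<in>h ` T. \<Prod>k\<in>h ` T-{j}. cc t (x j) (z k)) = (\<Prod>j\<in>T. \<Prod>k\<in>h ` T-{h j}. cc t (x (h j)) (z k))"
      by (rule prod.reindex[OF inj, unfolded comp_def])
    also have "\<dots> = (\<Prod>j\<in>T. \<Prod>k\<in>T-{j}. cc t ((x \<circ> h) j) ((z \<circ> h) k))"
      by (rule prod.cong[OF refl]) (simp add: im1 prod.reindex[OF inj1])
    finally show ?thesis .
  qed
  show ?thesis unfolding PsiS_def A B ..
qed

lemma L_S:
  assumes fin: "finite S" and ne: "S \<noteq> {}"
  shows "As S (PsiS t S x) y = 0"
proof -
  obtain h where h: "bij_betw h {0..<card S} S" using ex_bij_betw_nat_finite[OF fin] by blast
  obtain k where k: "card S = Suc k" using fin ne by (cases "card S") auto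
  have inj: "inj_on h {0..<card S}" and im: "h ` {0..<card S} = S" using h by (auto simp: bij_betw_def)
  have "As S (PsiS t S x) y = As {0..<card S} (PsiS t {0..<card S} (x \<circ> h)) (y \<circ> h)"
  proof (rule As_transport[OF h])
    fix z show "PsiS t S x z = PsiS t {0..<card S} (x \<circ> h) (z \<circ> h)"
      using PsiS_reindex[OF inj, of t x z] im by simp
  next
    fix z z' :: "nat \<Rightarrow> complex" assume "\<And>i. i < card S \<Longrightarrow> z i = z' i"
    then show "PsiS t {0..<card S} (x \<circ> h) z = PsiS t {0..<card S} (x \<circ> h) z'"
      by (intro PsiS_cong) auto
  qed
  also have "\<dots> = 0"
  proof -
    let ?x = "x \<circ> h"
    have eq: "PsiS t {0..<Suc k} ?x = (\<lambda>z. (\<Sum>i<Suc k. termL (Suc k) t ?x i z) -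
        (\<Prod>j<Suc k. \<Prod>k'\<in>{0..<Suc k}-{j}. cc t (?x j) (z k')))"
      unfolding PsiS_def termL_def by (rule ext) (simp add: atLeast0LessThan del: sum.lessThan_Suc prod.lessThan_Suc)
    have "As {0..<Suc k} (PsiS t {0..<Suc k} ?x) (y \<circ> h) =
        (\<Sum>i<Suc k. As {0..<Suc k} (termL (Suc k) t ?x i) (y \<circ> h)) - PhiC (Suc k) t ?x (y \<circ> h)"
      unfolding PhiC_def eq by (simp only: As_diff As_sum)
    also have "\<dots> = 0" using L0 by simp
    finally show ?thesis using k by simp
  qed
  finally show ?thesis .
qed

definition dd :: "complex \<Rightarrow> complex \<Rightarrow> complex" where "dd a b = 1 - a * b"
definition aa :: "complex \<Rightarrow> complex \<Rightarrow> complex \<Rightarrow> complex" where "aa t p q = p * q + t * q + 1"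
definition pairs :: "nat set \<Rightarrow> (nat \<times> nat) set" where "pairs A = {(j,k). j \<in> A \<and> k \<in> A \<and> j \<noteq> k}"

definition cP :: "complex \<Rightarrow> (nat \<Rightarrow> complex) \<Rightarrow> (nat \<Rightarrow> complex) \<Rightarrow> nat \<times> nat \<Rightarrow> complex" where
  "cP t x z p = cc t (x (fst p)) (z (snd p))"

definition TT :: "complex \<Rightarrow> nat set \<Rightarrow> (nat \<Rightarrow> complex) \<Rightarrow> (nat \<Rightarrow> complex) \<Rightarrow> complex" where
  "TT t N x z = (\<Prod>j\<in>N. 1 / dd (x j) (z j)) * prod (cP t x z) (pairs N)"

definition XX :: "complex \<Rightarrow> nat set \<Rightarrow> nat \<Rightarrow> (nat \<Rightarrow> complex) \<Rightarrow> complex" where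
  "XX t N i x = (\<Prod>l\<in>N-{i}. x l * aa t (x l) (x i))"

definition WW :: "complex \<Rightarrow> nat set \<Rightarrow> nat set \<Rightarrow> (nat \<Rightarrow> complex) \<Rightarrow> (nat \<Rightarrow> complex) \<Rightarrow> complex" where
  "WW t N S x z = (\<Prod>j\<in>N-S. x j * z j / dd (x j) (z j)) * prod (cP t x z) (pairs N - pairs S)"

lemma finite_pairs[simp]: "finite A \<Longrightarrow> finite (pairs A)"
proof -
  assume "finite A"
  then have "finite (A \<times> A)" by simp
  moreover have "pairs A \<subseteq> A \<times> A" by (auto simp: pairs_def)
  ultimately show ?thesis by (rule finite_subset[rotated])
qed

lemma pairs_mono: "A \<subseteq> B \<Longrightarrow> pairs A \<subseteq> pairs B"
  by (auto simp: pairs_def)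

lemma prod_pairs:
  assumes "finite A"
  shows "(\<Prod>j\<in>A. \<Prod>k\<in>A-{j}. g j k) = (\<Prod>p\<in>pairs A. g (fst p) (snd p))"
proof -
  have "(\<Prod>j\<in>A. \<Prod>k\<in>A-{j}. g j k) = (\<Prod>(j,k)\<in>Sigma A (\<lambda>j. A-{j}). g j k)"
    by (subst prod.Sigma) (use assms in auto)
  also have "Sigma A (\<lambda>j. A-{j}) = pairs A" by (auto simp: pairs_def)
  finally show ?thesis by (simp add: case_prod_beta)
qed

lemma pair_id:
  "aa t (x l) (x i) * aa t (z l) (z i) = cc t (x i) (z l) * cc t (x l) (z i) + dd (x l) (z l) * ee t (x i) (z i)"
  unfolding aa_def cc_def dd_def ee_def by (simp add: algebra_simps)

lemma PsiS_pairs: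
  assumes "finite S"
  shows "PsiS t S x z = (\<Sum>i\<in>S. ee t (x i) (z i) ^ (card S - 1) * (\<Prod>k\<in>S-{i}. x k * z k) *
      prod (cP t x z) (pairs (S-{i}))) - prod (cP t x z) (pairs S)"
proof -
  have "(\<Prod>j\<in>S-{i}. \<Prod>k\<in>S-{i,j}. cc t (x j) (z k)) = prod (cP t x z) (pairs (S-{i}))" for i
  proof -
    have "(\<Prod>j\<in>S-{i}. \<Prod>k\<in>S-{i,j}. cc t (x j) (z k)) = (\<Prod>j\<in>S-{i}. \<Prod>k\<in>(S-{i})-{j}. cc t (x j) (z k))"
      by (rule prod.cong) (auto intro!: prod.cong)
    also have "\<dots> = prod (cP t x z) (pairs (S-{i}))"
      using prod_pairs[of "S-{i}" "\<lambda>j k. cc t (x j) (z k)"] assms by (simp add: cP_def)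
    finally show ?thesis .
  qed
  moreover have "(\<Prod>j\<in>S. \<Prod>k\<in>S-{j}. cc t (x j) (z k)) = prod (cP t x z) (pairs S)"
    using prod_pairs[of S "\<lambda>j k. cc t (x j) (z k)"] assms by (simp add: cP_def)
  ultimately show ?thesis unfolding PsiS_def by simp
qed

lemma pair_set_identity:
  assumes fin: "finite N" and SN: "S \<subseteq> N" and iS: "i \<in> S"
  shows "(\<Prod>l\<in>N-S. g (i,l)) * (\<Prod>l\<in>N-S. g (l,i)) * prod g (pairs (N-{i}))
       = prod g (pairs N - pairs S) * prod g (pairs (S-{i}))"
proof -
  let ?A = "(\<lambda>l. (i,l)) ` (N-S)" and ?B = "(\<lambda>l. (l,i)) ` (N-S)"
  let ?C = "pairs (N-{i}) - pairs (S-{i})"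
  have finN: "finite (N - S)" using fin by simp
  have pA: "(\<Prod>l\<in>N-S. g (i,l)) = prod g ?A"
    by (subst prod.reindex) (auto simp: inj_on_def)
  have pB: "(\<Prod>l\<in>N-S. g (l,i)) = prod g ?B"
    by (subst prod.reindex) (auto simp: inj_on_def)
  have fC: "finite ?C" using fin by simp
  have fA: "finite ?A" "finite ?B" using finN by auto
  have split1: "prod g (pairs (N-{i})) = prod g ?C * prod g (pairs (S-{i}))"
  proof (rule prod.subset_diff)
    show "pairs (S-{i}) \<subseteq> pairs (N-{i})" using SN by (auto simp: pairs_def)
    show "finite (pairs (N-{i}))" using fin by simp
  qed
  have seteq: "pairs N - pairs S = ?A \<union> (?B \<union> ?C)"
    using SN iS by (auto simp: pairs_def)
  have d1: "?A \<inter> (?B \<union> ?C) = {}" using iS by (auto simp: pairs_def)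
  have d2: "?B \<inter> ?C = {}" by (auto simp: pairs_def)
  have "prod g (pairs N - pairs S) = prod g ?A * (prod g ?B * prod g ?C)"
    unfolding seteq
    by (simp add: prod.union_disjoint[OF fA(1) _ d1] prod.union_disjoint[OF fA(2) fC d2] fA fC)
  then show ?thesis using pA pB split1 by (simp add: mult_ac)
qed

lemma part1:
  assumes fin: "finite N" and dnz: "\<And>j. j \<in> N \<Longrightarrow> dd (x j) (z j) \<noteq> 0"
  shows "(\<Sum>i\<in>N. XX t N i x * XX t N i z * TT t (N-{i}) x z) =
    (\<Sum>S\<in>Pow N. WW t N S x z * (\<Sum>i\<in>S. ee t (x i) (z i) ^ (card S - 1) * (\<Prod>k\<in>S-{i}. x k * z k) *
        prod (cP t x z) (pairs (S-{i}))))"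
proof -
  define G where "G i S = WW t N S x z * (ee t (x i) (z i) ^ (card S - 1) * (\<Prod>k\<in>S-{i}. x k * z k) *
        prod (cP t x z) (pairs (S-{i})))" for i S
  have stepA: "XX t N i x * XX t N i z * TT t (N-{i}) x z = (\<Sum>B\<in>Pow (N-{i}). G i (insert i B))"
    if i: "i \<in> N" for i
  proof -
    let ?e = "ee t (x i) (z i)"
    define f1 where "f1 l = x l * z l * dd (x l) (z l) * ?e" for l
    define f2 where "f2 l = x l * z l * (cc t (x i) (z l) * cc t (x l) (z i))" for l
    have "XX t N i x * XX t N i z = (\<Prod>l\<in>N-{i}. f1 l + f2 l)"
      unfolding XX_def prod.distrib[symmetric]
    proof (rule prod.cong[OF refl])
      fix l
      show "x l * aa t (x l) (x i) * (z l * aa t (z l) (z i)) = f1 l + f2 l"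
        using pair_id[of t x l i z] unfolding f1_def f2_def
        by (simp add: algebra_simps)
    qed
    also have "\<dots> = (\<Sum>B\<in>Pow (N-{i}). (\<Prod>l\<in>B. f1 l) * (\<Prod>l\<in>N-{i}-B. f2 l))"
      by (rule prod_add) (use fin in simp)
    finally have XXe: "XX t N i x * XX t N i z = (\<Sum>B\<in>Pow (N-{i}). (\<Prod>l\<in>B. f1 l) * (\<Prod>l\<in>N-{i}-B. f2 l))" .
    have termB: "(\<Prod>l\<in>B. f1 l) * (\<Prod>l\<in>N-{i}-B. f2 l) * TT t (N-{i}) x z = G i (insert i B)"
      if B: "B \<subseteq> N - {i}" for B
    proof -
      let ?S = "insert i B"
      have iB: "i \<notin> B" using B by auto
      have finB: "finite B" using B fin finite_subset by blast
      have SN: "?S \<subseteq> N" using B i by auto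
      have S1: "?S - {i} = B" using iB by auto
      have cS: "card ?S - 1 = card B" using finB iB by simp
      have NSB: "N - {i} - B = N - ?S" by auto
      have Nsplit: "N - {i} = B \<union> (N - ?S)" using B by auto
      have disj: "B \<inter> (N - ?S) = {}" by auto
      have p1: "(\<Prod>l\<in>B. f1 l) = ?e ^ card B * (\<Prod>l\<in>B. x l * z l) * (\<Prod>l\<in>B. dd (x l) (z l))"
        unfolding f1_def by (simp add: prod.distrib)
      have p2: "(\<Prod>l\<in>N-?S. f2 l) = (\<Prod>l\<in>N-?S. x l * z l) * ((\<Prod>l\<in>N-?S. cP t x z (i,l)) * (\<Prod>l\<in>N-?S. cP t x z (l,i)))"
        unfolding f2_def by (simp add: prod.distrib cP_def)
      have p3: "(\<Prod>j\<in>N-{i}. 1 / dd (x j) (z j)) = (\<Prod>j\<in>B. 1 / dd (x j) (z j)) * (\<Prod>j\<in>N-?S. 1 / dd (x j) (z j))"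
        unfolding Nsplit by (rule prod.union_disjoint) (use finB fin disj in auto)
      have p4: "(\<Prod>l\<in>B. dd (x l) (z l)) * (\<Prod>j\<in>B. 1 / dd (x j) (z j)) = 1"
        unfolding prod.distrib[symmetric] using B dnz by (intro prod.neutral) auto
      have p5: "(\<Prod>l\<in>N-?S. cP t x z (i,l)) * (\<Prod>l\<in>N-?S. cP t x z (l,i)) * prod (cP t x z) (pairs (N-{i}))
          = prod (cP t x z) (pairs N - pairs ?S) * prod (cP t x z) (pairs B)"
        using pair_set_identity[OF fin SN, of i "cP t x z"] S1 by simp
      have p6: "(\<Prod>j\<in>N-?S. x j * z j / dd (x j) (z j)) = (\<Prod>l\<in>N-?S. x l * z l) * (\<Prod>j\<in>N-?S. 1 / dd (x j) (z j))"
        by (simp add: prod.distrib[symmetric])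
      have "(\<Prod>l\<in>B. f1 l) * (\<Prod>l\<in>N-{i}-B. f2 l) * TT t (N-{i}) x z =
          (?e ^ card B * (\<Prod>l\<in>B. x l * z l)) * ((\<Prod>l\<in>B. dd (x l) (z l)) * (\<Prod>j\<in>B. 1 / dd (x j) (z j))) *
          ((\<Prod>l\<in>N-?S. x l * z l) * (\<Prod>j\<in>N-?S. 1 / dd (x j) (z j))) *
          ((\<Prod>l\<in>N-?S. cP t x z (i,l)) * (\<Prod>l\<in>N-?S. cP t x z (l,i)) * prod (cP t x z) (pairs (N-{i})))"
        unfolding NSB p1 p2 TT_def p3 by (simp add: mult_ac)
      also have "\<dots> = G i ?S"
        unfolding p4 p5 p6[symmetric] G_def WW_def S1 cS by (simp add: mult_ac)
      finally show ?thesis .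
    qed
    have "XX t N i x * XX t N i z * TT t (N-{i}) x z =
        (\<Sum>B\<in>Pow (N-{i}). (\<Prod>l\<in>B. f1 l) * (\<Prod>l\<in>N-{i}-B. f2 l) * TT t (N-{i}) x z)"
      unfolding XXe by (rule sum_distrib_right)
    also have "\<dots> = (\<Sum>B\<in>Pow (N-{i}). G i (insert i B))"
      by (rule sum.cong[OF refl]) (simp add: termB)
    finally show ?thesis .
  qed
  have stepB: "(\<Sum>B\<in>Pow (N-{i}). G i (insert i B)) = (\<Sum>S\<in>{S. S \<in> Pow N \<and> i \<in> S}. G i S)"
    if i: "i \<in> N" for i
  proof (rule sum.reindex_bij_witness[where i = "\<lambda>S. S - {i}" and j = "insert i"])
  qed (use i in auto)
  have "(\<Sum>i\<in>N. XX t N i x * XX t N i z * TT t (N-{i}) x z) = (\<Sum>i\<in>N. \<Sum>S\<in>{S. S \<in> Pow N \<and> i \<in> S}. G i S)"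
    by (rule sum.cong[OF refl]) (simp add: stepA stepB)
  also have "\<dots> = (\<Sum>S\<in>Pow N. \<Sum>i\<in>{i. i \<in> N \<and> i \<in> S}. G i S)"
    by (rule sum.swap_restrict) (use fin in auto)
  also have "\<dots> = (\<Sum>S\<in>Pow N. \<Sum>i\<in>S. G i S)"
    by (rule sum.cong[OF refl]) (rule sum.cong, auto)
  also have "\<dots> = (\<Sum>S\<in>Pow N. WW t N S x z * (\<Sum>i\<in>S. ee t (x i) (z i) ^ (card S - 1) * (\<Prod>k\<in>S-{i}. x k * z k) *
        prod (cP t x z) (pairs (S-{i}))))"
    unfolding G_def by (simp add: sum_distrib_left)
  finally show ?thesis .
qed

lemma part2:
  assumes fin: "finite N" and dnz: "\<And>j. j \<in> N \<Longrightarrow> dd (x j) (z j) \<noteq> 0"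
  shows "(1 - (\<Prod>j\<in>N. x j * z j)) * TT t N x z = (\<Sum>S\<in>Pow N - {{}}. WW t N S x z * prod (cP t x z) (pairs S))"
proof -
  have "1 = (\<Prod>j\<in>N. dd (x j) (z j) + x j * z j)"
    by (simp add: dd_def)
  also have "\<dots> = (\<Sum>S\<in>Pow N. (\<Prod>j\<in>S. dd (x j) (z j)) * (\<Prod>j\<in>N-S. x j * z j))"
    by (rule prod_add[OF fin])
  also have "\<dots> = (\<Prod>j\<in>N. x j * z j) + (\<Sum>S\<in>Pow N - {{}}. (\<Prod>j\<in>S. dd (x j) (z j)) * (\<Prod>j\<in>N-S. x j * z j))"
    by (subst sum.remove[of _ "{}"]) (use fin in auto)
  finally have oneP: "1 - (\<Prod>j\<in>N. x j * z j) = (\<Sum>S\<in>Pow N - {{}}. (\<Prod>j\<in>S. dd (x j) (z j)) * (\<Prod>j\<in>N-S. x j * z j))"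
    by (simp add: algebra_simps)
  have each: "(\<Prod>j\<in>S. dd (x j) (z j)) * (\<Prod>j\<in>N-S. x j * z j) * TT t N x z = WW t N S x z * prod (cP t x z) (pairs S)"
    if S: "S \<subseteq> N" for S
  proof -
    have finS: "finite S" using S fin finite_subset by blast
    have q1: "(\<Prod>j\<in>N. 1 / dd (x j) (z j)) = (\<Prod>j\<in>N-S. 1 / dd (x j) (z j)) * (\<Prod>j\<in>S. 1 / dd (x j) (z j))"
      by (rule prod.subset_diff[OF S fin])
    have q2: "prod (cP t x z) (pairs N) = prod (cP t x z) (pairs N - pairs S) * prod (cP t x z) (pairs S)"
    proof (rule prod.subset_diff)
      show "pairs S \<subseteq> pairs N" using S by (auto simp: pairs_def)
      show "finite (pairs N)" using fin by simp
    qed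
    have q3: "(\<Prod>j\<in>S. dd (x j) (z j)) * (\<Prod>j\<in>S. 1 / dd (x j) (z j)) = 1"
      unfolding prod.distrib[symmetric] using S dnz by (intro prod.neutral) auto
    have q4: "(\<Prod>j\<in>N-S. x j * z j / dd (x j) (z j)) = (\<Prod>l\<in>N-S. x l * z l) * (\<Prod>j\<in>N-S. 1 / dd (x j) (z j))"
      by (simp add: prod.distrib[symmetric])
    have "(\<Prod>j\<in>S. dd (x j) (z j)) * (\<Prod>j\<in>N-S. x j * z j) * TT t N x z =
      ((\<Prod>j\<in>S. dd (x j) (z j)) * (\<Prod>j\<in>S. 1 / dd (x j) (z j))) *
      ((\<Prod>l\<in>N-S. x l * z l) * (\<Prod>j\<in>N-S. 1 / dd (x j) (z j))) * prod (cP t x z) (pairs N - pairs S) * prod (cP t x z) (pairs S)"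
      unfolding TT_def q1 q2 by (simp add: mult_ac)
    also have "\<dots> = WW t N S x z * prod (cP t x z) (pairs S)"
      unfolding q3 q4[symmetric] WW_def by simp
    finally show ?thesis .
  qed
  show ?thesis
    unfolding oneP sum_distrib_right
    by (rule sum.cong[OF refl]) (simp add: each)
qed

lemma DEC:
  assumes fin: "finite N" and dnz: "\<And>j. j \<in> N \<Longrightarrow> dd (x j) (z j) \<noteq> 0"
  shows "(\<Sum>i\<in>N. XX t N i x * XX t N i z * TT t (N-{i}) x z) - (1 - (\<Prod>j\<in>N. x j * z j)) * TT t N x z
    = (\<Sum>S\<in>Pow N - {{}}. WW t N S x z * PsiS t S x z)"
proof -
  define A where "A S = (\<Sum>i\<in>S. ee t (x i) (z i) ^ (card S - 1) * (\<Prod>k\<in>S-{i}. x k * z k) *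
        prod (cP t x z) (pairs (S-{i})))" for S
  have "(\<Sum>i\<in>N. XX t N i x * XX t N i z * TT t (N-{i}) x z) = (\<Sum>S\<in>Pow N. WW t N S x z * A S)"
    unfolding A_def by (rule part1[OF fin dnz])
  also have "\<dots> = (\<Sum>S\<in>Pow N - {{}}. WW t N S x z * A S)"
    by (subst sum.remove[of _ "{}"]) (use fin in \<open>auto simp: A_def\<close>)
  finally have e1: "(\<Sum>i\<in>N. XX t N i x * XX t N i z * TT t (N-{i}) x z) = (\<Sum>S\<in>Pow N - {{}}. WW t N S x z * A S)" .
  have e2: "PsiS t S x z = A S - prod (cP t x z) (pairs S)" if "S \<in> Pow N - {{}}" for S
  proof -
    have "finite S" using that fin finite_subset by auto
    then show ?thesis unfolding A_def by (rule PsiS_pairs)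
  qed
  have "(\<Sum>i\<in>N. XX t N i x * XX t N i z * TT t (N-{i}) x z) - (1 - (\<Prod>j\<in>N. x j * z j)) * TT t N x z
    = (\<Sum>S\<in>Pow N - {{}}. WW t N S x z * A S) - (\<Sum>S\<in>Pow N - {{}}. WW t N S x z * prod (cP t x z) (pairs S))"
    using e1 part2[OF fin dnz, where t = t] by simp
  also have "\<dots> = (\<Sum>S\<in>Pow N - {{}}. WW t N S x z * A S - WW t N S x z * prod (cP t x z) (pairs S))"
    by (rule sum_subtractf[symmetric])
  also have "\<dots> = (\<Sum>S\<in>Pow N - {{}}. WW t N S x z * PsiS t S x z)"
    by (rule sum.cong[OF refl]) (simp add: e2 right_diff_distrib)
  finally show ?thesis .
qed

lemma WW_sym:
  assumes fin: "finite N" and SN: "S \<subseteq> N" and p: "p permutes S"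
  shows "WW t N S x (z \<circ> p) = WW t N S x z"
proof -
  have f1: "(\<Prod>j\<in>N-S. x j * (z \<circ> p) j / dd (x j) ((z \<circ> p) j)) = (\<Prod>j\<in>N-S. x j * z j / dd (x j) (z j))"
    by (rule prod.cong[OF refl]) (simp add: permutes_not_in[OF p])
  have ip: "inv_into UNIV p permutes S" using permutes_inv[OF p] .
  have memS: "p k \<in> S \<longleftrightarrow> k \<in> S" for k using permutes_in_image[OF p] .
  have memS': "inv_into UNIV p k \<in> S \<longleftrightarrow> k \<in> S" for k using permutes_in_image[OF ip] .
  have memN: "p k \<in> N \<longleftrightarrow> k \<in> N" for k using memS SN permutes_not_in[OF p] by (metis subsetD)
  have memN': "inv_into UNIV p k \<in> N \<longleftrightarrow> k \<in> N" for k using memS' SN permutes_not_in[OF ip] by (metis subsetD)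
  have f2: "prod (cP t x (z \<circ> p)) (pairs N - pairs S) = prod (cP t x z) (pairs N - pairs S)"
  proof (rule prod.reindex_bij_witness[where i = "\<lambda>(j,k). (j, inv_into UNIV p k)" and j = "\<lambda>(j,k). (j, p k)"])
    fix a assume a: "a \<in> pairs N - pairs S"
    obtain j k where jk: "a = (j,k)" by (cases a)
    from a jk have j: "j \<in> N" and k: "k \<in> N" and ne: "j \<noteq> k" and nb: "\<not> (j \<in> S \<and> k \<in> S)"
      by (auto simp: pairs_def)
    show "(case (case a of (j, k) \<Rightarrow> (j, p k)) of (j, k) \<Rightarrow> (j, inv_into UNIV p k)) = a"
      using jk permutes_inverses(2)[OF p] by simp
    have "j \<noteq> p k"
    proof
      assume "j = p k"
      then have "k \<in> S" using nb memS permutes_not_in[OF p] ne by metis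
      then show False using \<open>j = p k\<close> memS nb by auto
    qed
    then show "(case a of (j, k) \<Rightarrow> (j, p k)) \<in> pairs N - pairs S"
      using jk j k nb memS memN by (auto simp: pairs_def)
    show "cP t x z (case a of (j, k) \<Rightarrow> (j, p k)) = cP t x (z \<circ> p) a"
      using jk by (simp add: cP_def)
  next
    fix a assume a: "a \<in> pairs N - pairs S"
    obtain j k where jk: "a = (j,k)" by (cases a)
    from a jk have j: "j \<in> N" and k: "k \<in> N" and ne: "j \<noteq> k" and nb: "\<not> (j \<in> S \<and> k \<in> S)"
      by (auto simp: pairs_def)
    show "(case (case a of (j, k) \<Rightarrow> (j, inv_into UNIV p k)) of (j, k) \<Rightarrow> (j, p k)) = a"
      using jk permutes_inverses(1)[OF p] by simp
    have "j \<noteq> inv_into UNIV p k"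
    proof
      assume "j = inv_into UNIV p k"
      then have "k \<in> S" using nb memS' permutes_not_in[OF ip] ne by metis
      then show False using \<open>j = inv_into UNIV p k\<close> memS' nb by auto
    qed
    then show "(case a of (j, k) \<Rightarrow> (j, inv_into UNIV p k)) \<in> pairs N - pairs S"
      using jk j k nb memS' memN' by (auto simp: pairs_def)
  qed
  show ?thesis unfolding WW_def f1 f2 ..
qed

lemma KK:
  assumes fin: "finite N" and dnz: "\<And>j k. j \<in> N \<Longrightarrow> k \<in> N \<Longrightarrow> dd (x j) (y k) \<noteq> 0"
  shows "As N (\<lambda>z. (\<Sum>i\<in>N. XX t N i x * XX t N i z * TT t (N-{i}) x z) - (1 - (\<Prod>j\<in>N. x j * z j)) * TT t N x z) y = 0"
proof -
  have "As N (\<lambda>z. (\<Sum>i\<in>N. XX t N i x * XX t N i z * TT t (N-{i}) x z) - (1 - (\<Prod>j\<in>N. x j * z j)) * TT t N x z) y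
      = As N (\<lambda>z. \<Sum>S\<in>Pow N - {{}}. WW t N S x z * PsiS t S x z) y"
  proof (rule As_cong)
    fix p assume p: "p permutes N"
    show "(\<Sum>i\<in>N. XX t N i x * XX t N i (y \<circ> p) * TT t (N-{i}) x (y \<circ> p)) - (1 - (\<Prod>j\<in>N. x j * (y \<circ> p) j)) * TT t N x (y \<circ> p)
        = (\<Sum>S\<in>Pow N - {{}}. WW t N S x (y \<circ> p) * PsiS t S x (y \<circ> p))"
      by (rule DEC[OF fin]) (use dnz permutes_in_image[OF p] in auto)
  qed
  also have "\<dots> = (\<Sum>S\<in>Pow N - {{}}. As N (\<lambda>z. WW t N S x z * PsiS t S x z) y)"
    by (rule As_sum)
  also have "\<dots> = 0"
  proof (rule sum.neutral, rule ballI)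
    fix S assume S: "S \<in> Pow N - {{}}"
    then have SN: "S \<subseteq> N" and ne: "S \<noteq> {}" by auto
    have finS: "finite S" using SN fin finite_subset by blast
    show "As N (\<lambda>z. WW t N S x z * PsiS t S x z) y = 0"
      by (rule As_sub_zero[OF fin SN]) (use WW_sym[OF fin SN] L_S[OF finS ne] in auto)
  qed
  finally show ?thesis .
qed

lemma summand_rec:
  "lhs_summand (Suc m) t x y =
     (\<Prod>l\<in>{1..m}. x l * y l) / (1 - (\<Prod>l=1..Suc m. x l * y l)) *
     (\<Prod>l\<in>{1..m}. aa t (x l) (x (Suc m)) * aa t (y l) (y (Suc m))) * lhs_summand m t x y"
proof -
  define D where "D j = 1 - (\<Prod>l=1..j. x l * y l)" for j
  define f where "f j k = (x j * x k + t * x k + 1) * (y j * y k + t * y k + 1)" for j k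
  have ins: "{1..Suc m} = insert (Suc m) {1..m}" by auto
  have A: "(\<Prod>j=1..Suc m. (x j * y j) ^ (Suc m - j) / D j) =
      (\<Prod>l\<in>{1..m}. x l * y l) * (\<Prod>j=1..m. (x j * y j) ^ (m - j) / D j) * (1 / D (Suc m))"
  proof -
    have "(\<Prod>j=1..Suc m. (x j * y j) ^ (Suc m - j) / D j) = (\<Prod>j=1..m. (x j * y j) ^ (Suc m - j) / D j) * (1 / D (Suc m))"
      unfolding ins by (simp add: mult.commute)
    also have "(\<Prod>j=1..m. (x j * y j) ^ (Suc m - j) / D j) = (\<Prod>j=1..m. (x j * y j) * ((x j * y j) ^ (m - j) / D j))"
    proof (rule prod.cong[OF refl])
      fix j assume "j \<in> {1..m}"
      then have "Suc m - j = Suc (m - j)" by auto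
      then show "(x j * y j) ^ (Suc m - j) / D j = (x j * y j) * ((x j * y j) ^ (m - j) / D j)" by simp
    qed
    also have "\<dots> = (\<Prod>l\<in>{1..m}. x l * y l) * (\<Prod>j=1..m. (x j * y j) ^ (m - j) / D j)"
      by (rule prod.distrib)
    finally show ?thesis .
  qed
  have B: "(\<Prod>j\<in>{1..Suc m}. \<Prod>k\<in>{j<..Suc m}. f j k) = (\<Prod>j\<in>{1..m}. f j (Suc m)) * (\<Prod>j\<in>{1..m}. \<Prod>k\<in>{j<..m}. f j k)"
  proof -
    have "(\<Prod>j\<in>{1..Suc m}. \<Prod>k\<in>{j<..Suc m}. f j k) = (\<Prod>j\<in>{1..m}. \<Prod>k\<in>{j<..Suc m}. f j k)"
      unfolding ins by simp
    also have "\<dots> = (\<Prod>j\<in>{1..m}. f j (Suc m) * (\<Prod>k\<in>{j<..m}. f j k))"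
    proof (rule prod.cong[OF refl])
      fix j assume "j \<in> {1..m}"
      then have "{j<..Suc m} = insert (Suc m) {j<..m}" by auto
      then show "(\<Prod>k\<in>{j<..Suc m}. f j k) = f j (Suc m) * (\<Prod>k\<in>{j<..m}. f j k)" by simp
    qed
    also have "\<dots> = (\<Prod>j\<in>{1..m}. f j (Suc m)) * (\<Prod>j\<in>{1..m}. \<Prod>k\<in>{j<..m}. f j k)"
      by (rule prod.distrib)
    finally show ?thesis .
  qed
  have "lhs_summand (Suc m) t x y = (\<Prod>j=1..Suc m. (x j * y j) ^ (Suc m - j) / D j) * (\<Prod>j\<in>{1..Suc m}. \<Prod>k\<in>{j<..Suc m}. f j k)"
    unfolding lhs_summand_def D_def f_def ..
  also have "\<dots> = (\<Prod>l\<in>{1..m}. x l * y l) * (1 / D (Suc m)) * (\<Prod>j\<in>{1..m}. f j (Suc m)) *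
       ((\<Prod>j=1..m. (x j * y j) ^ (m - j) / D j) * (\<Prod>j\<in>{1..m}. \<Prod>k\<in>{j<..m}. f j k))"
    unfolding A B by (simp add: mult_ac)
  also have "(\<Prod>j=1..m. (x j * y j) ^ (m - j) / D j) * (\<Prod>j\<in>{1..m}. \<Prod>k\<in>{j<..m}. f j k) = lhs_summand m t x y"
    unfolding lhs_summand_def D_def f_def ..
  also have "(\<Prod>j\<in>{1..m}. f j (Suc m)) = (\<Prod>l\<in>{1..m}. aa t (x l) (x (Suc m)) * aa t (y l) (y (Suc m)))"
    unfolding f_def aa_def ..
  finally show ?thesis unfolding D_def by simp
qed

definition LL :: "nat \<Rightarrow> complex \<Rightarrow> (nat \<Rightarrow> complex) \<Rightarrow> (nat \<Rightarrow> complex) \<Rightarrow> complex" where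
  "LL n t x y = As {1..n} (\<lambda>x'. As {1..n} (\<lambda>y'. lhs_summand n t x' y') y) x"

definition tr :: "nat \<Rightarrow> nat \<Rightarrow> nat \<Rightarrow> nat" where
  "tr m b = Transposition.transpose (Suc m) b"

definition eps :: "nat \<Rightarrow> nat \<Rightarrow> complex" where
  "eps m b = (if b = Suc m then 1 else -1)"

lemma tr_permutes: "b \<in> {1..Suc m} \<Longrightarrow> tr m b permutes {1..Suc m}"
  unfolding tr_def by (rule permutes_swap_id) auto

lemma tr_Suc[simp]: "tr m b (Suc m) = b"
  unfolding tr_def by simp

lemma ins_N: "{1..Suc m} = insert (Suc m) {1..m}" by auto

lemma tr_bij: assumes "b \<in> {1..Suc m}" shows "bij_betw (tr m b) {1..m} ({1..Suc m} - {b})"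
proof -
  have "bij_betw (tr m b) ({1..Suc m} - {Suc m}) ({1..Suc m} - {tr m b (Suc m)})"
    by (rule bij_betw_remove1[OF tr_permutes[OF assms]]) simp
  moreover have "{1..Suc m} - {Suc m} = {1..m}" by auto
  ultimately show ?thesis by simp
qed

lemma prod_tr:
  assumes "b \<in> {1..Suc m}"
  shows "(\<Prod>l\<in>{1..m}. g (tr m b l)) = (\<Prod>l\<in>{1..Suc m}-{b}. g l)"
  using prod.reindex_bij_betw[OF tr_bij[OF assms], of g] .

lemma XX_tr:
  assumes "b \<in> {1..Suc m}"
  shows "(\<Prod>l\<in>{1..m}. (x \<circ> tr m b) l * aa t ((x \<circ> tr m b) l) ((x \<circ> tr m b) (Suc m))) = XX t {1..Suc m} b x"
  unfolding XX_def using prod_tr[OF assms, of "\<lambda>l. x l * aa t (x l) (x b)"] by simp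

lemma prod_perm_split:
  assumes "finite N" "p permutes N" "q permutes N"
  shows "(\<Prod>l\<in>N. x (p l) * y (q l)) = (\<Prod>l\<in>N. x l * y l)"
proof -
  have "(\<Prod>l\<in>N. x (p l) * y (q l)) = (\<Prod>l\<in>N. x (p l)) * (\<Prod>l\<in>N. y (q l))" by (rule prod.distrib)
  also have "(\<Prod>l\<in>N. x (p l)) = (\<Prod>l\<in>N. x l)" using prod.permute[OF assms(2), of x] by (simp add: comp_def)
  also have "(\<Prod>l\<in>N. y (q l)) = (\<Prod>l\<in>N. y l)" using prod.permute[OF assms(3), of y] by (simp add: comp_def)
  finally show ?thesis by (simp add: prod.distrib)
qed

lemma LL_rec:
  "LL (Suc m) t x y = 1 / (1 - (\<Prod>l\<in>{1..Suc m}. x l * y l)) *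
    (\<Sum>b\<in>{1..Suc m}. \<Sum>c\<in>{1..Suc m}. eps m b * eps m c * XX t {1..Suc m} b x * XX t {1..Suc m} c y *
        LL m t (x \<circ> tr m b) (y \<circ> tr m c))"
proof -
  let ?N = "{1..Suc m}" and ?M = "{1..m}"
  define Fx where "Fx x' = (\<Prod>l\<in>?M. x' l * aa t (x' l) (x' (Suc m)))" for x' :: "nat \<Rightarrow> complex"
  define Fxy where "Fxy x' y' = 1 / (1 - (\<Prod>l\<in>?N. x' l * y' l))" for x' y' :: "nat \<Rightarrow> complex"
  have finM: "finite ?M" and nM: "Suc m \<notin> ?M" by auto
  have summ: "lhs_summand (Suc m) t x' y' = Fx x' * Fx y' * Fxy x' y' * lhs_summand m t x' y'" for x' y'
    unfolding summand_rec Fx_def Fxy_def by (simp add: prod.distrib mult_ac)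
  have Fx_sym: "Fx (w \<circ> p) = Fx w" if p: "p permutes ?M" for w p
  proof -
    have pS: "p (Suc m) = Suc m" using permutes_not_in[OF p nM] .
    have "Fx (w \<circ> p) = (\<Prod>l\<in>?M. (\<lambda>l. w l * aa t (w l) (w (Suc m))) (p l))"
      unfolding Fx_def by (simp add: pS)
    also have "\<dots> = Fx w" unfolding Fx_def using prod.permute[OF p, of "\<lambda>l. w l * aa t (w l) (w (Suc m))"]
      by (simp add: comp_def)
    finally show ?thesis .
  qed
  have Fxy_inv: "Fxy (v \<circ> p) (w \<circ> q) = Fxy v w" if p: "p permutes ?N" and q: "q permutes ?N" for v w p q
    unfolding Fxy_def using prod_perm_split[OF _ p q, of v w] by simp
  have MN: "p permutes ?M \<Longrightarrow> p permutes ?N" for p by (erule permutes_subset) auto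
  have inner: "As ?N (\<lambda>y'. lhs_summand (Suc m) t x' y') y =
      (\<Sum>c\<in>?N. eps m c * (Fx x' * Fx (y \<circ> tr m c) * Fxy x' (y \<circ> tr m c)) * As ?M (lhs_summand m t x') (y \<circ> tr m c))" for x'
  proof -
    have "As ?N (\<lambda>y'. lhs_summand (Suc m) t x' y') y =
        (\<Sum>c\<in>?N. eps m c * As ?M (\<lambda>y'. lhs_summand (Suc m) t x' y') (y \<circ> tr m c))"
      unfolding ins_N As_insert[OF finM nM] eps_def tr_def ..
    also have "\<dots> = (\<Sum>c\<in>?N. eps m c * (Fx x' * Fx (y \<circ> tr m c) * Fxy x' (y \<circ> tr m c)) * As ?M (lhs_summand m t x') (y \<circ> tr m c))"
    proof (rule sum.cong[OF refl])
      fix c assume "c \<in> ?N"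
      have "As ?M (\<lambda>y'. (Fx x' * Fx y' * Fxy x' y') * lhs_summand m t x' y') (y \<circ> tr m c) =
          (Fx x' * Fx (y \<circ> tr m c) * Fxy x' (y \<circ> tr m c)) * As ?M (lhs_summand m t x') (y \<circ> tr m c)"
      proof (rule As_sym_factor)
        fix p z assume p: "p permutes ?M"
        show "Fx x' * Fx (z \<circ> p) * Fxy x' (z \<circ> p) = Fx x' * Fx z * Fxy x' z"
          using Fx_sym[OF p] Fxy_inv[OF permutes_id MN[OF p], of x' z] by (simp add: id_def comp_def)
      qed
      then show "eps m c * As ?M (\<lambda>y'. lhs_summand (Suc m) t x' y') (y \<circ> tr m c) =
          eps m c * (Fx x' * Fx (y \<circ> tr m c) * Fxy x' (y \<circ> tr m c)) * As ?M (lhs_summand m t x') (y \<circ> tr m c)"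
        unfolding summ by simp
    qed
    finally show ?thesis .
  qed
  have "LL (Suc m) t x y = As ?N (\<lambda>x'. \<Sum>c\<in>?N. eps m c * Fx (y \<circ> tr m c) *
      ((Fx x' * Fxy x' (y \<circ> tr m c)) * As ?M (lhs_summand m t x') (y \<circ> tr m c))) x"
    unfolding LL_def inner by (simp add: mult_ac)
  also have "\<dots> = (\<Sum>c\<in>?N. eps m c * Fx (y \<circ> tr m c) *
      As ?N (\<lambda>x'. (Fx x' * Fxy x' (y \<circ> tr m c)) * As ?M (lhs_summand m t x') (y \<circ> tr m c)) x)"
    by (simp only: As_sum As_cmult)
  also have "\<dots> = (\<Sum>c\<in>?N. eps m c * Fx (y \<circ> tr m c) * (\<Sum>b\<in>?N. eps m b *
      ((Fx (x \<circ> tr m b) * Fxy (x \<circ> tr m b) (y \<circ> tr m c)) * LL m t (x \<circ> tr m b) (y \<circ> tr m c))))"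
  proof (rule sum.cong[OF refl])
    fix c assume c: "c \<in> ?N"
    have "As ?N (\<lambda>x'. (Fx x' * Fxy x' (y \<circ> tr m c)) * As ?M (lhs_summand m t x') (y \<circ> tr m c)) x
      = (\<Sum>b\<in>?N. eps m b * As ?M (\<lambda>x'. (Fx x' * Fxy x' (y \<circ> tr m c)) * As ?M (lhs_summand m t x') (y \<circ> tr m c)) (x \<circ> tr m b))"
      unfolding ins_N As_insert[OF finM nM] eps_def tr_def ..
    also have "\<dots> = (\<Sum>b\<in>?N. eps m b * ((Fx (x \<circ> tr m b) * Fxy (x \<circ> tr m b) (y \<circ> tr m c)) * LL m t (x \<circ> tr m b) (y \<circ> tr m c)))"
    proof (rule sum.cong[OF refl])
      fix b assume b: "b \<in> ?N"
      have "As ?M (\<lambda>x'. (Fx x' * Fxy x' (y \<circ> tr m c)) * As ?M (lhs_summand m t x') (y \<circ> tr m c)) (x \<circ> tr m b)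
          = (Fx (x \<circ> tr m b) * Fxy (x \<circ> tr m b) (y \<circ> tr m c)) * As ?M (\<lambda>x'. As ?M (lhs_summand m t x') (y \<circ> tr m c)) (x \<circ> tr m b)"
      proof (rule As_sym_factor)
        fix p z assume p: "p permutes ?M"
        show "Fx (z \<circ> p) * Fxy (z \<circ> p) (y \<circ> tr m c) = Fx z * Fxy z (y \<circ> tr m c)"
          using Fx_sym[OF p] Fxy_inv[OF MN[OF p] permutes_id, of z "y \<circ> tr m c"] by (simp add: id_def comp_def)
      qed
      then show "eps m b * As ?M (\<lambda>x'. (Fx x' * Fxy x' (y \<circ> tr m c)) * As ?M (lhs_summand m t x') (y \<circ> tr m c)) (x \<circ> tr m b)
          = eps m b * ((Fx (x \<circ> tr m b) * Fxy (x \<circ> tr m b) (y \<circ> tr m c)) * LL m t (x \<circ> tr m b) (y \<circ> tr m c))"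
        unfolding LL_def by simp
    qed
    finally show "eps m c * Fx (y \<circ> tr m c) * As ?N (\<lambda>x'. (Fx x' * Fxy x' (y \<circ> tr m c)) * As ?M (lhs_summand m t x') (y \<circ> tr m c)) x
      = eps m c * Fx (y \<circ> tr m c) * (\<Sum>b\<in>?N. eps m b * ((Fx (x \<circ> tr m b) * Fxy (x \<circ> tr m b) (y \<circ> tr m c)) * LL m t (x \<circ> tr m b) (y \<circ> tr m c)))"
      by simp
  qed
  also have "\<dots> = (\<Sum>c\<in>?N. \<Sum>b\<in>?N. 1 / (1 - (\<Prod>l\<in>?N. x l * y l)) * (eps m b * eps m c * XX t ?N b x * XX t ?N c y *
        LL m t (x \<circ> tr m b) (y \<circ> tr m c)))"
  proof (rule sum.cong[OF refl])
    fix c assume c: "c \<in> ?N"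
    show "eps m c * Fx (y \<circ> tr m c) * (\<Sum>b\<in>?N. eps m b * ((Fx (x \<circ> tr m b) * Fxy (x \<circ> tr m b) (y \<circ> tr m c)) * LL m t (x \<circ> tr m b) (y \<circ> tr m c)))
      = (\<Sum>b\<in>?N. 1 / (1 - (\<Prod>l\<in>?N. x l * y l)) * (eps m b * eps m c * XX t ?N b x * XX t ?N c y * LL m t (x \<circ> tr m b) (y \<circ> tr m c)))"
      unfolding sum_distrib_left
    proof (rule sum.cong[OF refl])
      fix b assume b: "b \<in> ?N"
      have "Fxy (x \<circ> tr m b) (y \<circ> tr m c) = 1 / (1 - (\<Prod>l\<in>?N. x l * y l))"
        using Fxy_inv[OF tr_permutes[OF b] tr_permutes[OF c], of x y] unfolding Fxy_def by simp
      moreover have "Fx (x \<circ> tr m b) = XX t ?N b x" unfolding Fx_def by (rule XX_tr[OF b])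
      moreover have "Fx (y \<circ> tr m c) = XX t ?N c y" unfolding Fx_def by (rule XX_tr[OF c])
      ultimately show "eps m c * Fx (y \<circ> tr m c) * (eps m b * ((Fx (x \<circ> tr m b) * Fxy (x \<circ> tr m b) (y \<circ> tr m c)) * LL m t (x \<circ> tr m b) (y \<circ> tr m c)))
        = 1 / (1 - (\<Prod>l\<in>?N. x l * y l)) * (eps m b * eps m c * XX t ?N b x * XX t ?N c y * LL m t (x \<circ> tr m b) (y \<circ> tr m c))"
        by (simp add: mult_ac)
    qed
  qed
  also have "\<dots> = 1 / (1 - (\<Prod>l\<in>?N. x l * y l)) *
    (\<Sum>c\<in>?N. \<Sum>b\<in>?N. eps m b * eps m c * XX t ?N b x * XX t ?N c y * LL m t (x \<circ> tr m b) (y \<circ> tr m c))"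
    by (simp only: sum_distrib_left)
  also have "(\<Sum>c\<in>?N. \<Sum>b\<in>?N. eps m b * eps m c * XX t ?N b x * XX t ?N c y * LL m t (x \<circ> tr m b) (y \<circ> tr m c))
     = (\<Sum>b\<in>?N. \<Sum>c\<in>?N. eps m b * eps m c * XX t ?N b x * XX t ?N c y * LL m t (x \<circ> tr m b) (y \<circ> tr m c))"
    by (rule sum.swap)
  finally show ?thesis .
qed

definition RR :: "nat \<Rightarrow> complex \<Rightarrow> (nat \<Rightarrow> complex) \<Rightarrow> (nat \<Rightarrow> complex) \<Rightarrow> complex" where
  "RR n t x y = As {1..n} (TT t {1..n} x) y"

lemma pairs_bij:
  assumes "bij_betw f A B"
  shows "bij_betw (\<lambda>(j,k). (f j, f k)) (pairs A) (pairs B)"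
proof -
  have inj: "inj_on f A" and im: "f ` A = B" using assms by (auto simp: bij_betw_def)
  show ?thesis
  proof (rule bij_betw_imageI)
    show "inj_on (\<lambda>(j,k). (f j, f k)) (pairs A)"
      using inj by (auto simp: inj_on_def pairs_def)
    show "(\<lambda>(j,k). (f j, f k)) ` pairs A = pairs B"
    proof
      show "(\<lambda>(j,k). (f j, f k)) ` pairs A \<subseteq> pairs B"
        using inj im by (auto simp: pairs_def inj_on_def)
      show "pairs B \<subseteq> (\<lambda>(j,k). (f j, f k)) ` pairs A"
      proof
        fix p assume "p \<in> pairs B"
        then obtain j' k' where p: "p = (j',k')" "j' \<in> B" "k' \<in> B" "j' \<noteq> k'" by (auto simp: pairs_def)
        then obtain j k where "j \<in> A" "k \<in> A" "f j = j'" "f k = k'" using im by blast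
        then show "p \<in> (\<lambda>(j,k). (f j, f k)) ` pairs A"
          using p by (auto simp: pairs_def image_iff intro!: bexI[where x = "(j,k)"])
      qed
    qed
  qed
qed

lemma XX_tr2:
  assumes b: "b \<in> {1..Suc m}"
  shows "XX t {1..Suc m} (Suc m) (z \<circ> tr m b) = XX t {1..Suc m} b z"
proof -
  have "{1..Suc m} - {Suc m} = {1..m}" by auto
  then have "XX t {1..Suc m} (Suc m) (z \<circ> tr m b) = (\<Prod>l\<in>{1..m}. (z \<circ> tr m b) l * aa t ((z \<circ> tr m b) l) ((z \<circ> tr m b) (Suc m)))"
    unfolding XX_def by simp
  also have "\<dots> = XX t {1..Suc m} b z" by (rule XX_tr[OF b])
  finally show ?thesis .
qed

lemma TT_tr:
  assumes b: "b \<in> {1..Suc m}"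
  shows "TT t {1..m} (x \<circ> tr m b) (z \<circ> tr m b) = TT t ({1..Suc m} - {b}) x z"
proof -
  have p1: "(\<Prod>j\<in>{1..m}. 1 / dd ((x \<circ> tr m b) j) ((z \<circ> tr m b) j)) = (\<Prod>j\<in>{1..Suc m}-{b}. 1 / dd (x j) (z j))"
    using prod_tr[OF b, of "\<lambda>j. 1 / dd (x j) (z j)"] by simp
  have p2: "prod (cP t (x \<circ> tr m b) (z \<circ> tr m b)) (pairs {1..m}) = prod (cP t x z) (pairs ({1..Suc m} - {b}))"
    using prod.reindex_bij_betw[OF pairs_bij[OF tr_bij[OF b]], of "cP t x z"]
    by (simp add: cP_def case_prod_beta)
  show ?thesis unfolding TT_def p1 p2 ..
qed

lemma sign_tr: "b \<in> {1..Suc m} \<Longrightarrow> of_int (sign (tr m b)) = eps m b"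
  unfolding tr_def eps_def by (auto simp: sign_swap_id)

lemma RR_rec:
  assumes dnz: "\<And>j k. j \<in> {1..Suc m} \<Longrightarrow> k \<in> {1..Suc m} \<Longrightarrow> dd (x j) (y k) \<noteq> 0"
  shows "(1 - (\<Prod>l\<in>{1..Suc m}. x l * y l)) * RR (Suc m) t x y =
    (\<Sum>b\<in>{1..Suc m}. \<Sum>c\<in>{1..Suc m}. eps m b * eps m c * XX t {1..Suc m} b x * XX t {1..Suc m} c y *
        RR m t (x \<circ> tr m b) (y \<circ> tr m c))"
proof -
  let ?N = "{1..Suc m}" and ?M = "{1..m}"
  have finN: "finite ?N" by simp
  have finM: "finite ?M" and nM: "Suc m \<notin> ?M" by auto
  have K: "As ?N (\<lambda>z. (\<Sum>i\<in>?N. XX t ?N i x * XX t ?N i z * TT t (?N-{i}) x z) - (1 - (\<Prod>j\<in>?N. x j * z j)) * TT t ?N x z) y = 0"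
    by (rule KK[OF finN dnz])
  have R1: "As ?N (\<lambda>z. (1 - (\<Prod>j\<in>?N. x j * z j)) * TT t ?N x z) y = (1 - (\<Prod>l\<in>?N. x l * y l)) * RR (Suc m) t x y"
    unfolding RR_def
  proof (rule As_sym_factor)
    fix p z assume p: "p permutes ?N"
    show "1 - (\<Prod>j\<in>?N. x j * (z \<circ> p) j) = 1 - (\<Prod>j\<in>?N. x j * z j)"
      using prod_perm_split[OF finN permutes_id p, of x z] by (simp add: id_def)
  qed
  have inner: "As ?N (\<lambda>z. XX t ?N b z * TT t (?N-{b}) x z) y =
      eps m b * (\<Sum>c\<in>?N. eps m c * XX t ?N c y * RR m t (x \<circ> tr m b) (y \<circ> tr m c))" if b: "b \<in> ?N" for b
  proof -
    define H where "H w = XX t ?N (Suc m) w * TT t ?M (x \<circ> tr m b) w" for w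
    have HF: "XX t ?N b z * TT t (?N-{b}) x z = H (z \<circ> tr m b)" for z
    proof -
      have "z \<circ> tr m b \<circ> tr m b = z" unfolding tr_def by (simp add: comp_assoc)
      then have "TT t ?M (x \<circ> tr m b) (z \<circ> tr m b) = TT t (?N-{b}) x z"
        using TT_tr[OF b] by simp
      then show ?thesis unfolding H_def XX_tr2[OF b] by simp
    qed
    have "As ?N (\<lambda>z. XX t ?N b z * TT t (?N-{b}) x z) y = As ?N (\<lambda>z. H (z \<circ> tr m b)) y"
      unfolding HF ..
    also have "\<dots> = eps m b * As ?N H y"
      using As_reindex[OF finN tr_permutes[OF b], of H y] sign_tr[OF b] by simp
    also have "As ?N H y = (\<Sum>c\<in>?N. eps m c * As ?M H (y \<circ> tr m c))"
      unfolding ins_N As_insert[OF finM nM] eps_def tr_def ..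
    also have "\<dots> = (\<Sum>c\<in>?N. eps m c * XX t ?N c y * RR m t (x \<circ> tr m b) (y \<circ> tr m c))"
    proof (rule sum.cong[OF refl])
      fix c assume c: "c \<in> ?N"
      have "As ?M H (y \<circ> tr m c) = XX t ?N (Suc m) (y \<circ> tr m c) * As ?M (TT t ?M (x \<circ> tr m b)) (y \<circ> tr m c)"
        unfolding H_def
      proof (rule As_sym_factor)
        fix p w assume p: "p permutes ?M"
        have pS: "p (Suc m) = Suc m" using permutes_not_in[OF p nM] .
        have e: "?N - {Suc m} = ?M" by auto
        show "XX t ?N (Suc m) (w \<circ> p) = XX t ?N (Suc m) w"
          unfolding XX_def e using prod.permute[OF p, of "\<lambda>l. w l * aa t (w l) (w (Suc m))"]
          by (simp add: comp_def pS)
      qed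
      then show "eps m c * As ?M H (y \<circ> tr m c) = eps m c * XX t ?N c y * RR m t (x \<circ> tr m b) (y \<circ> tr m c)"
        unfolding XX_tr2[OF c] RR_def by simp
    qed
    finally show ?thesis .
  qed
  have "(1 - (\<Prod>l\<in>?N. x l * y l)) * RR (Suc m) t x y = As ?N (\<lambda>z. \<Sum>i\<in>?N. XX t ?N i x * XX t ?N i z * TT t (?N-{i}) x z) y"
    using K R1 by (simp add: As_diff)
  also have "\<dots> = (\<Sum>b\<in>?N. XX t ?N b x * As ?N (\<lambda>z. XX t ?N b z * TT t (?N-{b}) x z) y)"
    by (simp only: As_sum mult.assoc As_cmult)
  also have "\<dots> = (\<Sum>b\<in>?N. \<Sum>c\<in>?N. eps m b * eps m c * XX t ?N b x * XX t ?N c y * RR m t (x \<circ> tr m b) (y \<circ> tr m c))"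
  proof (rule sum.cong[OF refl])
    fix b assume b: "b \<in> ?N"
    show "XX t ?N b x * As ?N (\<lambda>z. XX t ?N b z * TT t (?N-{b}) x z) y =
      (\<Sum>c\<in>?N. eps m b * eps m c * XX t ?N b x * XX t ?N c y * RR m t (x \<circ> tr m b) (y \<circ> tr m c))"
      unfolding inner[OF b] sum_distrib_left by (rule sum.cong[OF refl]) (simp add: mult_ac)
  qed
  finally show ?thesis .
qed

definition cond :: "nat \<Rightarrow> (nat \<Rightarrow> complex) \<Rightarrow> (nat \<Rightarrow> complex) \<Rightarrow> bool" where
  "cond n x y \<longleftrightarrow> (\<forall>\<sigma> \<pi> j. \<sigma> permutes {1..n} \<longrightarrow> \<pi> permutes {1..n} \<longrightarrow> j \<in> {1..n} \<longrightarrow>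
       1 - (\<Prod>l=1..j. x (\<sigma> l) * y (\<pi> l)) \<noteq> 0) \<and>
     (\<forall>j\<in>{1..n}. \<forall>k\<in>{1..n}. dd (x j) (y k) \<noteq> 0)"

lemma As_empty: "As {} f y = f y"
  unfolding As_def by (simp add: permutes_empty)

lemma cond_tr:
  assumes c: "cond (Suc m) x y" and b: "b \<in> {1..Suc m}" and cc: "c \<in> {1..Suc m}"
  shows "cond m (x \<circ> tr m b) (y \<circ> tr m c)"
  unfolding cond_def
proof (intro conjI allI impI ballI)
  fix \<sigma> \<pi> j assume s: "\<sigma> permutes {1..m}" and p: "\<pi> permutes {1..m}" and j: "j \<in> {1..m}"
  have s': "tr m b \<circ> \<sigma> permutes {1..Suc m}"
    by (rule permutes_compose[OF permutes_subset[OF s] tr_permutes[OF b]]) auto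
  have p': "tr m c \<circ> \<pi> permutes {1..Suc m}"
    by (rule permutes_compose[OF permutes_subset[OF p] tr_permutes[OF cc]]) auto
  have j': "j \<in> {1..Suc m}" using j by auto
  have "1 - (\<Prod>l=1..j. x ((tr m b \<circ> \<sigma>) l) * y ((tr m c \<circ> \<pi>) l)) \<noteq> 0"
    using c s' p' j' unfolding cond_def by blast
  then show "1 - (\<Prod>l=1..j. (x \<circ> tr m b) (\<sigma> l) * (y \<circ> tr m c) (\<pi> l)) \<noteq> 0" by simp
next
  fix j k assume j: "j \<in> {1..m}" and k: "k \<in> {1..m}"
  have "tr m b j \<in> {1..Suc m}" using permutes_in_image[OF tr_permutes[OF b], of j] j by auto
  moreover have "tr m c k \<in> {1..Suc m}" using permutes_in_image[OF tr_permutes[OF cc], of k] k by auto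
  ultimately show "dd ((x \<circ> tr m b) j) ((y \<circ> tr m c) k) \<noteq> 0"
    using c unfolding cond_def by simp
qed

lemma LL_RR: "cond n x y \<Longrightarrow> LL n t x y = RR n t x y"
proof (induction n arbitrary: x y)
  case 0
  have "LL 0 t x y = lhs_summand 0 t x y" unfolding LL_def by (simp add: As_empty)
  also have "\<dots> = 1" unfolding lhs_summand_def by simp
  also have "RR 0 t x y = 1" unfolding RR_def TT_def by (simp add: As_empty pairs_def)
  ultimately show ?case by simp
next
  case (Suc m)
  let ?N = "{1..Suc m}"
  let ?P = "\<Prod>l\<in>?N. x l * y l"
  have P: "1 - ?P \<noteq> 0"
  proof -
    have "1 - (\<Prod>l=1..Suc m. x (id l) * y (id l)) \<noteq> 0"
      using Suc.prems permutes_id unfolding cond_def by (metis atLeastAtMost_iff le_add1 order_refl plus_1_eq_Suc)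
    then show ?thesis by simp
  qed
  have dnz: "\<And>j k. j \<in> ?N \<Longrightarrow> k \<in> ?N \<Longrightarrow> dd (x j) (y k) \<noteq> 0"
    using Suc.prems unfolding cond_def by blast
  have "LL (Suc m) t x y = 1 / (1 - ?P) *
    (\<Sum>b\<in>?N. \<Sum>c\<in>?N. eps m b * eps m c * XX t ?N b x * XX t ?N c y * LL m t (x \<circ> tr m b) (y \<circ> tr m c))"
    by (rule LL_rec)
  also have "(\<Sum>b\<in>?N. \<Sum>c\<in>?N. eps m b * eps m c * XX t ?N b x * XX t ?N c y * LL m t (x \<circ> tr m b) (y \<circ> tr m c))
    = (\<Sum>b\<in>?N. \<Sum>c\<in>?N. eps m b * eps m c * XX t ?N b x * XX t ?N c y * RR m t (x \<circ> tr m b) (y \<circ> tr m c))"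
  proof (rule sum.cong[OF refl])
    fix b assume b: "b \<in> ?N"
    show "(\<Sum>c\<in>?N. eps m b * eps m c * XX t ?N b x * XX t ?N c y * LL m t (x \<circ> tr m b) (y \<circ> tr m c))
      = (\<Sum>c\<in>?N. eps m b * eps m c * XX t ?N b x * XX t ?N c y * RR m t (x \<circ> tr m b) (y \<circ> tr m c))"
    proof (rule sum.cong[OF refl])
      fix c assume c: "c \<in> ?N"
      show "eps m b * eps m c * XX t ?N b x * XX t ?N c y * LL m t (x \<circ> tr m b) (y \<circ> tr m c)
        = eps m b * eps m c * XX t ?N b x * XX t ?N c y * RR m t (x \<circ> tr m b) (y \<circ> tr m c)"
        by (rule arg_cong[where f = "\<lambda>v. eps m b * eps m c * XX t ?N b x * XX t ?N c y * v"])
           (rule Suc.IH[OF cond_tr[OF Suc.prems b c]])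
    qed
  qed
  also have "\<dots> = (1 - ?P) * RR (Suc m) t x y"
    by (rule RR_rec[OF dnz, symmetric])
  finally show ?case using P by simp
qed

lemma RR_det:
  assumes cnz: "\<And>j k. j \<in> {1..s} \<Longrightarrow> k \<in> {1..s} \<Longrightarrow> x j + y k + \<tau> * x j * y k \<noteq> 0"
  shows "RR s \<tau> x y = (\<Prod>j=1..s. \<Prod>k=1..s. x j + y k + \<tau> * x j * y k) *
         det (mat s s (\<lambda>(j, k). psi \<tau> (x (j + 1)) (y (k + 1))))"
proof -
  let ?N = "{1..s}"
  have bijS: "bij_betw Suc {0..<s} ?N"
    by (rule bij_betw_imageI) (auto simp: image_Suc_atLeastLessThan)
  let ?M = "mat s s (\<lambda>(j, k). psi \<tau> (x (j + 1)) (y (k + 1)))"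
  have "det ?M = (\<Sum>p | p permutes {0..<s}. signof p * (\<Prod>i = 0..<s. ?M $$ (i, p i)))"
    by (rule det_def') simp
  also have "\<dots> = As {0..<s} (\<lambda>w. \<Prod>i<s. psi \<tau> (x (Suc i)) (w i)) (y \<circ> Suc)"
    unfolding As_def
  proof (rule sum.cong[OF refl])
    fix p assume "p \<in> {p. p permutes {0..<s}}"
    then have p: "p permutes {0..<s}" by simp
    have "(\<Prod>i = 0..<s. ?M $$ (i, p i)) = (\<Prod>i<s. psi \<tau> (x (Suc i)) ((y \<circ> Suc \<circ> p) i))"
      unfolding atLeast0LessThan
    proof (rule prod.cong[OF refl])
      fix i assume "i \<in> {..<s}"
      then have i: "i < s" and pi: "p i < s" using permutes_in_image[OF p, of i] by auto
      show "?M $$ (i, p i) = psi \<tau> (x (Suc i)) ((y \<circ> Suc \<circ> p) i)" using i pi by simp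
    qed
    then show "signof p * (\<Prod>i = 0..<s. ?M $$ (i, p i)) = of_int (sign p) * (\<Prod>i<s. psi \<tau> (x (Suc i)) ((y \<circ> Suc \<circ> p) i))"
      by simp
  qed
  also have "\<dots> = As ?N (\<lambda>z. \<Prod>i<s. psi \<tau> (x (Suc i)) (z (Suc i))) y"
    by (rule As_transport[OF bijS, symmetric]) (auto intro!: prod.cong)
  also have "\<dots> = As ?N (\<lambda>z. \<Prod>j\<in>?N. psi \<tau> (x j) (z j)) y"
  proof -
    have "(\<Prod>i<s. psi \<tau> (x (Suc i)) (z (Suc i))) = (\<Prod>j\<in>?N. psi \<tau> (x j) (z j))" for z
      using prod.reindex_bij_betw[OF bijS, of "\<lambda>j. psi \<tau> (x j) (z j)"] by (simp add: atLeast0LessThan)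
    then show ?thesis by simp
  qed
  finally have D: "det (mat s s (\<lambda>(j, k). psi \<tau> (x (j + 1)) (y (k + 1)))) = As ?N (\<lambda>z. \<Prod>j\<in>?N. psi \<tau> (x j) (z j)) y" .
  define g where "g z = (\<Prod>j\<in>?N. \<Prod>k\<in>?N. cc \<tau> (x j) (z k))" for z
  have gy: "g y = (\<Prod>j=1..s. \<Prod>k=1..s. x j + y k + \<tau> * x j * y k)" unfolding g_def cc_def ..
  have "g y * As ?N (\<lambda>z. \<Prod>j\<in>?N. psi \<tau> (x j) (z j)) y = As ?N (\<lambda>z. g z * (\<Prod>j\<in>?N. psi \<tau> (x j) (z j))) y"
  proof (rule As_sym_factor[symmetric])
    fix p z assume p: "p permutes ?N"
    show "g (z \<circ> p) = g z" unfolding g_def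
    proof (rule prod.cong[OF refl])
      fix j
      show "(\<Prod>k\<in>?N. cc \<tau> (x j) ((z \<circ> p) k)) = (\<Prod>k\<in>?N. cc \<tau> (x j) (z k))"
        using prod.permute[OF p, of "\<lambda>k. cc \<tau> (x j) (z k)"] by (simp add: comp_def)
    qed
  qed
  also have "\<dots> = As ?N (TT \<tau> ?N x) y"
  proof (rule As_cong)
    fix p assume p: "p permutes ?N"
    let ?z = "y \<circ> p"
    have nz: "cc \<tau> (x j) (?z j) \<noteq> 0" if "j \<in> ?N" for j
      using cnz[OF that permutes_in_image[OF p, THEN iffD2, OF that]] by (simp add: cc_def)
    have "g ?z * (\<Prod>j\<in>?N. psi \<tau> (x j) (?z j)) = (\<Prod>j\<in>?N. (\<Prod>k\<in>?N. cc \<tau> (x j) (?z k)) * psi \<tau> (x j) (?z j))"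
      unfolding g_def by (simp add: prod.distrib)
    also have "\<dots> = (\<Prod>j\<in>?N. 1 / dd (x j) (?z j) * (\<Prod>k\<in>?N-{j}. cc \<tau> (x j) (?z k)))"
    proof (rule prod.cong[OF refl])
      fix j assume j: "j \<in> ?N"
      have "(\<Prod>k\<in>?N. cc \<tau> (x j) (?z k)) = cc \<tau> (x j) (?z j) * (\<Prod>k\<in>?N-{j}. cc \<tau> (x j) (?z k))"
        by (rule prod.remove) (use j in auto)
      moreover have "psi \<tau> (x j) (?z j) = 1 / (dd (x j) (?z j) * cc \<tau> (x j) (?z j))"
        unfolding psi_def dd_def cc_def ..
      ultimately show "(\<Prod>k\<in>?N. cc \<tau> (x j) (?z k)) * psi \<tau> (x j) (?z j) = 1 / dd (x j) (?z j) * (\<Prod>k\<in>?N-{j}. cc \<tau> (x j) (?z k))"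
        using nz[OF j] by (simp add: field_simps)
    qed
    also have "\<dots> = TT \<tau> ?N x ?z"
      unfolding TT_def prod.distrib using prod_pairs[of ?N "\<lambda>j k. cc \<tau> (x j) (?z k)"] by (simp add: cP_def)
    finally show "g ?z * (\<Prod>j\<in>?N. psi \<tau> (x j) (?z j)) = TT \<tau> ?N x ?z" .
  qed
  finally show ?thesis unfolding RR_def D gy by simp
qed

theorem proposition4p2:
  fixes s :: nat and \<tau> :: complex and x y :: "nat \<Rightarrow> complex"
  assumes "s \<ge> 1"
    and "\<And>\<sigma> \<pi> j. \<sigma> permutes {1..s} \<Longrightarrow> \<pi> permutes {1..s} \<Longrightarrow> j \<in> {1..s} \<Longrightarrow>
           1 - (\<Prod>l=1..j. x (\<sigma> l) * y (\<pi> l)) \<noteq> 0"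
    and "\<And>j k. j \<in> {1..s} \<Longrightarrow> k \<in> {1..s} \<Longrightarrow> 1 - x j * y k \<noteq> 0"
    and "\<And>j k. j \<in> {1..s} \<Longrightarrow> k \<in> {1..s} \<Longrightarrow> x j + y k + \<tau> * x j * y k \<noteq> 0"
  shows "antisym s (\<lambda>x'. antisym s (\<lambda>y'. lhs_summand s \<tau> x' y') y) x =
         (\<Prod>j=1..s. \<Prod>k=1..s. x j + y k + \<tau> * x j * y k) *
         det (mat s s (\<lambda>(j, k). psi \<tau> (x (j + 1)) (y (k + 1))))"
proof -
  have c: "cond s x y" unfolding cond_def dd_def using assms(2,3) by blast
  have "antisym s (\<lambda>x'. antisym s (\<lambda>y'. lhs_summand s \<tau> x' y') y) x = LL s \<tau> x y"
    unfolding LL_def antisym_As ..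
  also have "\<dots> = RR s \<tau> x y" by (rule LL_RR[OF c])
  also have "\<dots> = (\<Prod>j=1..s. \<Prod>k=1..s. x j + y k + \<tau> * x j * y k) *
         det (mat s s (\<lambda>(j, k). psi \<tau> (x (j + 1)) (y (k + 1))))"
    by (rule RR_det[OF assms(4)])
  finally show ?thesis .
qed

end
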